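(* Let $(\Omega,\mathcal{F},(\mathbb{F}_n)_{n\in\mathbb{N}_0},\mathbb{P})$ be a filtered probability space. For every $n\in\mathbb{N}$ let $\gamma_n\colon\Omega\to\mathbb{R}$ be $\mathbb{F}_{n-1}$-measurable, assume $\mathbb{P}(\limsup_{n\to\infty}\gamma_n=0)=\mathbb{P}(\sum_{n=1}^\infty|\gamma_n|=\infty)=1$, and assume $\mathbb{P}(\gamma_{n+1}\le\gamma_n)=1$ for all $n\in\mathbb{N}$. Let $d\in\mathbb{N}$, $\vartheta\in\mathbb{R}^d$, let $g\colon\mathbb{R}^d\to\mathbb{R}^d$ be measurable and locally bounded, and let $c\in(0,\infty)$ satisfy $\langle\theta-\vartheta,g(\theta)\rangle\le-c\|\theta-\vartheta\|^2$ for all $\theta\in\mathbb{R}^d$. Let $\Theta\colon\mathbb{N}_0\times\Omega\to\mathbb{R}^d$ be an $(\mathbb{F}_n)_{n\in\mathbb{N}_0}$-adapted process, let $D\colon\mathbb{N}\times\Omega\to\mathbb{R}^d$ be an $(\mathbb{F}_n)_{n\in\mathbb{N}}$-adapted process with $\mathbb{E}[\sup_{n\in\mathbb{N}}\|D_n\|^2]<\infty$, and assume that for all $n\in\mathbb{N}$ it holds $\mathbb{P}$-a.s. that $$\Theta_n=\Theta_{n-1}+\gamma_n g(\Theta_{n-1})+\gamma_n D_n\quad\text{and}\quad\mathbb{E}[D_n\mid\mathbb{F}_{n-1}]=0.$$ For every $t\in[0,\infty)$ let $N_t=\inf\{n\in\mathbb{N}_0\colon\sum_{k=1}^n\gamma_k\ge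 t\}$, and let $\mathcal{E}=\{\sup_{n\in\mathbb{N}}\|\Theta_n\|<\infty\}$. Then $$\limsup_{t\to\infty}\mathbb{E}\big[\min\{1,\|\Theta_{N_t}-\vartheta\|\mathbb{1}_{\mathcal{E}}\}\big]=0.$$
   Context: $\langle\cdot,\cdot\rangle$ and $\|\cdot\|$ denote the Euclidean inner product and norm; $\mathbb{1}_{\mathcal{E}}$ is the indicator of $\mathcal{E}$. *)

theory Defs
  imports "HOL-Probability.Probability"
begin

definition hit_index :: "(nat \<Rightarrow> 'a \<Rightarrow> real) \<Rightarrow> real \<Rightarrow> 'a \<Rightarrow> nat" where
  "hit_index \<gamma> t \<omega> = Inf {n. t \<le> (\<Sum>k\<in>{1..n}. \<gamma> k \<omega>)}"

end

theory Submission
  imports Defs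
begin

lemma tele_step:
  fixes \<gamma> :: "nat \<Rightarrow> real" and a L :: real
  assumes a: "a > 0" and nn: "0 \<le> \<gamma> (Suc m)" and bd: "\<gamma> (Suc m) \<le> L"
  shows "\<gamma> (Suc m) * exp (a * sum \<gamma> {1..Suc m})
     \<le> exp (a*L) / a * (exp (a * sum \<gamma> {1..Suc m}) - exp (a * sum \<gamma> {1..m}))"
proof -
  define x where "x = sum \<gamma> {1..m}"
  define y where "y = \<gamma> (Suc m)"
  have s: "sum \<gamma> {1..Suc m} = x + y" unfolding x_def y_def by simp
  have y0: "0 \<le> a*y" using a nn y_def by simp
  have 1: "a * y \<le> exp (a*y) - 1" using exp_ge_add_one_self[of "a*y"] by linarith
  have 2: "exp (a*y) \<le> exp (a*L)" using bd a y_def by simp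
  have "a*y * exp (a*y) \<le> (exp (a*y) - 1) * exp (a*L)"
    by (rule mult_mono[OF 1 2]) (use y0 in auto)
  then have "a*y * exp (a*y) * exp (a*x) \<le> (exp (a*y) - 1) * exp (a*L) * exp (a*x)"
    by (simp add: mult_right_mono)
  then have "a * (y * exp (a*(x+y))) \<le> a * (exp (a*L) / a * (exp (a*(x+y)) - exp (a*x)))"
    using a by (simp add: exp_add distrib_left algebra_simps)
  then have "y * exp (a*(x+y)) \<le> exp (a*L) / a * (exp (a*(x+y)) - exp (a*x))"
    using a mult_le_cancel_left_pos by blast
  then show ?thesis unfolding s by (simp add: y_def x_def)
qed

lemma tele_sum:
  fixes \<gamma> :: "nat \<Rightarrow> real" and a L :: real
  assumes a: "a > 0" and nn: "\<And>n. n \<ge> 1 \<Longrightarrow> 0 \<le> \<gamma> n" and bd: "\<And>n. n \<ge> 1 \<Longrightarrow> \<gamma> n \<le> L"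
    and mN: "m \<le> N"
  shows "(\<Sum>n\<in>{m<..N}. \<gamma> n * exp (a * sum \<gamma> {1..n}))
     \<le> exp (a*L) / a * (exp (a * sum \<gamma> {1..N}) - exp (a * sum \<gamma> {1..m}))"
  using mN
proof (induction N)
  case 0 then show ?case by simp
next
  case (Suc N)
  show ?case
  proof (cases "m = Suc N")
    case True then show ?thesis by simp
  next
    case False
    then have mN: "m \<le> N" using Suc.prems by simp
    have eq: "{m<..Suc N} = insert (Suc N) {m<..N}" using mN by auto
    have "(\<Sum>n\<in>{m<..Suc N}. \<gamma> n * exp (a * sum \<gamma> {1..n}))
        = \<gamma> (Suc N) * exp (a * sum \<gamma> {1..Suc N}) + (\<Sum>n\<in>{m<..N}. \<gamma> n * exp (a * sum \<gamma> {1..n}))"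
      unfolding eq by simp
    also have "\<dots> \<le> exp (a*L) / a * (exp (a * sum \<gamma> {1..Suc N}) - exp (a * sum \<gamma> {1..N}))
        + exp (a*L) / a * (exp (a * sum \<gamma> {1..N}) - exp (a * sum \<gamma> {1..m}))"
      by (rule add_mono[OF tele_step[OF a nn bd] Suc.IH[OF mN]]) auto
    also have "\<dots> = exp (a*L) / a * (exp (a * sum \<gamma> {1..Suc N}) - exp (a * sum \<gamma> {1..m}))"
      by (simp add: algebra_simps)
    finally show ?thesis .
  qed
qed

lemma dec_from1:
  fixes \<gamma> :: "nat \<Rightarrow> real"
  assumes mono: "\<And>n. n \<ge> 1 \<Longrightarrow> \<gamma> (Suc n) \<le> \<gamma> n" and "1 \<le> m" "m \<le> n"
  shows "\<gamma> n \<le> \<gamma> m"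
  using assms(3)
proof (induction n)
  case 0 then show ?case by simp
next
  case (Suc n)
  show ?case
  proof (cases "m = Suc n")
    case True then show ?thesis by simp
  next
    case False
    then have "m \<le> n" using Suc.prems by simp
    then show ?thesis using Suc.IH mono[of n] assms(2) by fastforce
  qed
qed

lemma det_split:
  fixes \<gamma> :: "nat \<Rightarrow> real" and a t :: real and N m :: nat
  assumes a: "a > 0" and nn: "\<And>n. n \<ge> 1 \<Longrightarrow> 0 \<le> \<gamma> n"
    and mono: "\<And>n. n \<ge> 1 \<Longrightarrow> \<gamma> (Suc n) \<le> \<gamma> n"
    and N1: "1 \<le> N" and Nt: "sum \<gamma> {1..N - 1} < t"
  shows "exp (-a*t) * (\<Sum>n\<in>{1..N}. \<gamma> n ^ 2 * exp (a * sum \<gamma> {1..n}))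
     \<le> exp (-a*t) * (\<Sum>n\<in>{1..m}. \<gamma> n ^ 2 * exp (a * sum \<gamma> {1..n}))
        + \<gamma> (Suc m) * exp (2*a*\<gamma> 1) / a"
proof -
  define L where "L = \<gamma> 1"
  have bd: "\<gamma> n \<le> L" if "n \<ge> 1" for n using dec_from1[of \<gamma>, OF mono, of 1 n] that L_def by simp
  define f where "f n = \<gamma> n ^ 2 * exp (a * sum \<gamma> {1..n})" for n
  have f0: "0 \<le> f n" for n unfolding f_def by simp
  have sN: "sum \<gamma> {1..N} \<le> t + L"
  proof -
    have "{1..N} = insert N {1..N-1}" using N1 by auto
    have "sum \<gamma> {1..N} = \<gamma> N + sum \<gamma> {1..N-1}" using N1 by (cases N) auto
    then show ?thesis using Nt bd[OF N1] by simp
  qed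
  have gm0: "0 \<le> \<gamma> (Suc m)" using nn by simp
  have tail: "(\<Sum>n\<in>{m<..N}. f n) \<le> \<gamma> (Suc m) * exp (2*a*L) / a * exp (a*t)"
  proof (cases "m \<le> N")
    case True
    have "(\<Sum>n\<in>{m<..N}. f n) \<le> (\<Sum>n\<in>{m<..N}. \<gamma> (Suc m) * (\<gamma> n * exp (a * sum \<gamma> {1..n})))"
    proof (rule sum_mono)
      fix n assume "n \<in> {m<..N}"
      then have "\<gamma> n \<le> \<gamma> (Suc m)" "0 \<le> \<gamma> n" using dec_from1[of \<gamma>, OF mono, of "Suc m" n] nn[of n] by auto
      then show "f n \<le> \<gamma> (Suc m) * (\<gamma> n * exp (a * sum \<gamma> {1..n}))"
      proof -
        have "\<gamma> n * \<gamma> n \<le> \<gamma> (Suc m) * \<gamma> n" by (rule mult_right_mono) fact+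
        from mult_right_mono[OF this exp_ge_zero[of "a * sum \<gamma> {1..n}"]]
        show ?thesis unfolding f_def power2_eq_square by (simp add: mult.assoc)
      qed
    qed
    also have "\<dots> = \<gamma> (Suc m) * (\<Sum>n\<in>{m<..N}. \<gamma> n * exp (a * sum \<gamma> {1..n}))"
      by (simp add: sum_distrib_left)
    also have "\<dots> \<le> \<gamma> (Suc m) * (exp (a*L) / a * (exp (a * sum \<gamma> {1..N}) - exp (a * sum \<gamma> {1..m})))"
      by (rule mult_left_mono[OF tele_sum[OF a nn bd True] gm0])
    also have "\<dots> \<le> \<gamma> (Suc m) * (exp (a*L) / a * exp (a * (t + L)))"
    proof -
      have "exp (a * sum \<gamma> {1..N}) \<le> exp (a * (t + L))" using sN a by simp
      moreover have "0 < exp (a * sum \<gamma> {1..m})" by simp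
      ultimately have "exp (a * sum \<gamma> {1..N}) - exp (a * sum \<gamma> {1..m}) \<le> exp (a * (t + L))" by linarith
      then show ?thesis using a gm0 by (intro mult_left_mono) auto
    qed
    also have "\<dots> = \<gamma> (Suc m) * exp (2*a*L) / a * exp (a*t)"
      by (simp add: exp_add[symmetric] algebra_simps)
    finally show ?thesis .
  next
    case False
    then have "{m<..N} = {}" by auto
    then show ?thesis using gm0 a by simp
  qed
  have head: "(\<Sum>n\<in>{1..N}. f n) \<le> (\<Sum>n\<in>{1..m}. f n) + (\<Sum>n\<in>{m<..N}. f n)"
  proof (cases "m \<le> N")
    case True
    have "{1..N} = {1..m} \<union> {m<..N}" using True by auto
    then have "(\<Sum>n\<in>{1..N}. f n) = (\<Sum>n\<in>{1..m}. f n) + (\<Sum>n\<in>{m<..N}. f n)"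
      by (simp add: sum.union_disjoint ivl_disj_int)
    then show ?thesis by simp
  next
    case False
    then have "(\<Sum>n\<in>{1..N}. f n) \<le> (\<Sum>n\<in>{1..m}. f n)" by (intro sum_mono2) (auto simp: f0)
    moreover have "{m<..N} = {}" using False by auto
    ultimately show ?thesis by simp
  qed
  have "exp (-a*t) * (\<Sum>n\<in>{1..N}. f n) \<le> exp (-a*t) * ((\<Sum>n\<in>{1..m}. f n) + \<gamma> (Suc m) * exp (2*a*L) / a * exp (a*t))"
    using head tail by (intro mult_left_mono) auto
  also have "\<dots> = exp (-a*t) * (\<Sum>n\<in>{1..m}. f n) + \<gamma> (Suc m) * exp (2*a*L) / a"
    by (simp add: algebra_simps exp_add[symmetric])
  finally show ?thesis unfolding f_def L_def .
qed

lemma det_lim: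
  fixes \<gamma> :: "nat \<Rightarrow> real" and a :: real and N :: "real \<Rightarrow> nat"
  assumes a: "a > 0" and nn: "\<And>n. n \<ge> 1 \<Longrightarrow> 0 \<le> \<gamma> n"
    and mono: "\<And>n. n \<ge> 1 \<Longrightarrow> \<gamma> (Suc n) \<le> \<gamma> n"
    and lim: "\<gamma> \<longlonglongrightarrow> 0"
    and Nt: "\<And>t. t > 0 \<Longrightarrow> 1 \<le> N t \<and> sum \<gamma> {1..N t - 1} < t"
  shows "((\<lambda>t. exp (-a*t) * (\<Sum>n\<in>{1..N t}. \<gamma> n ^ 2 * exp (a * sum \<gamma> {1..n}))) \<longlongrightarrow> 0) at_top"
proof (rule order_tendstoI)
  fix e :: real assume "e < 0"
  then show "\<forall>\<^sub>F t in at_top. e < exp (-a*t) * (\<Sum>n\<in>{1..N t}. \<gamma> n ^ 2 * exp (a * sum \<gamma> {1..n}))"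
  proof (intro always_eventually allI)
    fix t
    have "0 \<le> exp (-a*t) * (\<Sum>n\<in>{1..N t}. \<gamma> n ^ 2 * exp (a * sum \<gamma> {1..n}))"
      by (intro mult_nonneg_nonneg sum_nonneg) simp_all
    then show "e < exp (-a*t) * (\<Sum>n\<in>{1..N t}. \<gamma> n ^ 2 * exp (a * sum \<gamma> {1..n}))"
      using \<open>e < 0\<close> by linarith
  qed
next
  fix e :: real assume e: "0 < e"
  define K where "K = exp (2*a*\<gamma> 1) / a"
  have K: "K > 0" using a unfolding K_def by simp
  have "\<forall>\<^sub>F n in sequentially. \<gamma> n < e / (2*K)"
    using lim e K by (intro order_tendstoD) auto
  then obtain m where m: "\<gamma> (Suc m) < e / (2*K)" 
  proof -
    from \<open>\<forall>\<^sub>F n in sequentially. \<gamma> n < e / (2*K)\<close> obtain N0 where "\<And>n. n \<ge> N0 \<Longrightarrow> \<gamma> n < e / (2*K)"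
      unfolding eventually_sequentially by blast
    then show ?thesis using that[of N0] by simp
  qed
  define C where "C = (\<Sum>n\<in>{1..m}. \<gamma> n ^ 2 * exp (a * sum \<gamma> {1..n}))"
  have "((\<lambda>t. exp (-a*t) * C) \<longlongrightarrow> 0) at_top" 
  proof -
    have "filterlim (\<lambda>t::real. -a * t) at_bot at_top"
      using a by (intro filterlim_tendsto_neg_mult_at_bot[OF tendsto_const] filterlim_ident) auto
    then have "((\<lambda>t::real. exp (-a * t)) \<longlongrightarrow> 0) at_top"
      by (rule filterlim_compose[OF exp_at_bot])
    then show ?thesis by (rule tendsto_mult_left_zero)
  qed
  then have ev1: "\<forall>\<^sub>F t in at_top. exp (-a*t) * C < e/2" using e by (intro order_tendstoD) auto
  have ev2: "\<forall>\<^sub>F t::real in at_top. t > 0" by (rule eventually_gt_at_top)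
  show "\<forall>\<^sub>F t in at_top. exp (-a*t) * (\<Sum>n\<in>{1..N t}. \<gamma> n ^ 2 * exp (a * sum \<gamma> {1..n})) < e"
    using ev1 ev2
  proof eventually_elim
    case (elim t)
    have "exp (-a*t) * (\<Sum>n\<in>{1..N t}. \<gamma> n ^ 2 * exp (a * sum \<gamma> {1..n})) \<le> exp (-a*t) * C + \<gamma> (Suc m) * K"
      using det_split[of a \<gamma>, OF a nn mono, of "N t" t m] Nt[OF elim(2)] unfolding C_def K_def by auto
    also have "\<gamma> (Suc m) * K < e/2"
    proof -
      have "\<gamma> (Suc m) * K < e / (2*K) * K" using m K by (intro mult_strict_right_mono) auto
      also have "\<dots> = e/2" using K by simp
      finally show ?thesis .
    qed
    finally show ?case using elim(1) by simp
  qed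
qed

lemma det_bound:
  fixes \<gamma> :: "nat \<Rightarrow> real" and a t :: real and N :: nat
  assumes a: "a > 0" and nn: "\<And>n. n \<ge> 1 \<Longrightarrow> 0 \<le> \<gamma> n"
    and mono: "\<And>n. n \<ge> 1 \<Longrightarrow> \<gamma> (Suc n) \<le> \<gamma> n"
    and N1: "1 \<le> N" and Nt: "sum \<gamma> {1..N - 1} < t"
  shows "exp (-a*t) * (\<Sum>n\<in>{1..N}. \<gamma> n ^ 2 * exp (a * sum \<gamma> {1..n})) \<le> \<gamma> 1 * exp (2*a*\<gamma> 1) / a"
  using det_split[of a \<gamma>, OF a nn mono N1 Nt, of 0] by simp

locale sa =
  fixes M :: "'a measure" and F :: "nat \<Rightarrow> 'a measure"
    and \<gamma> :: "nat \<Rightarrow> 'a \<Rightarrow> real"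
    and \<theta>0 :: "'d::euclidean_space" and g :: "'d \<Rightarrow> 'd" and c :: real
    and \<Theta> :: "nat \<Rightarrow> 'a \<Rightarrow> 'd" and D :: "nat \<Rightarrow> 'a \<Rightarrow> 'd"
  assumes ps: "prob_space M"
    and filt: "filtration (space M) F"
    and subF: "\<And>n. subalgebra M (F n)"
    and gam_meas: "\<And>n. n \<ge> 1 \<Longrightarrow> \<gamma> n \<in> borel_measurable (F (n - 1))"
    and gam_limsup: "AE \<omega> in M. limsup (\<lambda>n. ereal (\<gamma> n \<omega>)) = 0"
    and gam_sum: "AE \<omega> in M. (\<Sum>n. ennreal \<bar>\<gamma> (Suc n) \<omega>\<bar>) = \<infinity>"
    and gam_mono: "\<And>n. n \<ge> 1 \<Longrightarrow> AE \<omega> in M. \<gamma> (Suc n) \<omega> \<le> \<gamma> n \<omega>"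
    and g_meas: "g \<in> borel_measurable borel"
    and g_lb: "\<And>x. \<exists>e>0. bounded (g ` ball x e)"
    and c_pos: "c > 0"
    and g_dir: "\<And>\<theta>. inner (\<theta> - \<theta>0) (g \<theta>) \<le> - c * (norm (\<theta> - \<theta>0))\<^sup>2"
    and Th_meas: "\<And>n. \<Theta> n \<in> borel_measurable (F n)"
    and D_meas: "\<And>n. n \<ge> 1 \<Longrightarrow> D n \<in> borel_measurable (F n)"
    and D_sq: "(\<integral>\<^sup>+ \<omega>. (\<Squnion>n\<in>{1..}. ennreal ((norm (D n \<omega>))\<^sup>2)) \<partial>M) < \<infinity>"
    and recur: "\<And>n. n \<ge> 1 \<Longrightarrow> AE \<omega> in M.
           \<Theta> n \<omega> = \<Theta> (n - 1) \<omega> + \<gamma> n \<omega> *\<^sub>R g (\<Theta> (n - 1) \<omega>) + \<gamma> n \<omega> *\<^sub>R D n \<omega>"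
    and cexp: "\<And>n b. n \<ge> 1 \<Longrightarrow> b \<in> Basis \<Longrightarrow>
           AE \<omega> in M. real_cond_exp M (F (n - 1)) (\<lambda>\<omega>. inner (D n \<omega>) b) \<omega> = 0"
begin

interpretation prob_space M by (rule ps)

lemma F_mono_meas:
  assumes "n \<le> m" "f \<in> measurable (F n) N" shows "f \<in> measurable (F m) N"
proof -
  have "subalgebra (F m) (F n)"
    unfolding subalgebra_def using filtration.space_F[OF filt] filtration.sets_F_mono[OF filt assms(1)] by auto
  then show ?thesis using measurable_from_subalg assms(2) by blast
qed

lemma F_to_M: "f \<in> measurable (F n) N \<Longrightarrow> f \<in> measurable M N"
  using measurable_from_subalg[OF subF] by blast

lemma gam_measM[measurable]: "n \<ge> 1 \<Longrightarrow> \<gamma> n \<in> borel_measurable M"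
  using F_to_M[OF gam_meas] by blast
lemma Th_measM[measurable]: "\<Theta> n \<in> borel_measurable M"
  using F_to_M[OF Th_meas] by blast
lemma D_measM[measurable]: "n \<ge> 1 \<Longrightarrow> D n \<in> borel_measurable M"
  using F_to_M[OF D_meas] by blast

definition s :: "nat \<Rightarrow> 'a \<Rightarrow> real" where "s n \<omega> = (\<Sum>k\<in>{1..n}. \<gamma> k \<omega>)"

lemma s_measF: "n \<le> m \<Longrightarrow> s n \<in> borel_measurable (F m)"
  unfolding s_def
proof (intro borel_measurable_sum)
  fix k assume "n \<le> m" "k \<in> {1..n}"
  then show "\<gamma> k \<in> borel_measurable (F m)"
    using F_mono_meas[of "k - 1" m "\<gamma> k" borel] gam_meas[of k] by auto
qed

lemma s_measM[measurable]: "s n \<in> borel_measurable M"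
  using F_to_M[OF s_measF[of n n]] by simp

lemma s_Suc: "s (Suc n) \<omega> = s n \<omega> + \<gamma> (Suc n) \<omega>"
  unfolding s_def by simp

lemma s_0[simp]: "s 0 \<omega> = 0" unfolding s_def by simp

definition Sup2 :: "'a \<Rightarrow> ennreal" where "Sup2 \<omega> = (\<Squnion>n\<in>{1..}. ennreal ((norm (D n \<omega>))\<^sup>2))"
definition S :: "'a \<Rightarrow> real" where "S \<omega> = enn2real (Sup2 \<omega>)"

lemma Sup2_meas[measurable]: "Sup2 \<in> borel_measurable M"
  unfolding Sup2_def by (rule borel_measurable_SUP) auto

lemma S_meas[measurable]: "S \<in> borel_measurable M"
  unfolding S_def by measurable

lemma Sup2_fin: "AE \<omega> in M. Sup2 \<omega> \<noteq> \<infinity>"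
  using D_sq unfolding Sup2_def[symmetric] by (intro nn_integral_noteq_infinite) auto

lemma S_nonneg: "0 \<le> S \<omega>" unfolding S_def by simp

lemma S_int: "integrable M S"
proof (rule integrableI_nn_integral_finite[where x="enn2real (\<integral>\<^sup>+ \<omega>. Sup2 \<omega> \<partial>M)"])
  show "AE x in M. 0 \<le> S x" using S_nonneg by simp
  have "(\<integral>\<^sup>+ x. ennreal (S x) \<partial>M) = (\<integral>\<^sup>+ x. Sup2 x \<partial>M)"
    using Sup2_fin by (intro nn_integral_cong_AE) (auto simp: S_def less_top)
  also have "\<dots> = ennreal (enn2real (\<integral>\<^sup>+ \<omega>. Sup2 \<omega> \<partial>M))"
    using D_sq unfolding Sup2_def[symmetric] by (simp add: ennreal_enn2real_if less_top)
  finally show "(\<integral>\<^sup>+ x. ennreal (S x) \<partial>M) = ennreal (enn2real (\<integral>\<^sup>+ \<omega>. Sup2 \<omega> \<partial>M))" .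
qed auto

lemma D_le_S:
  assumes "Sup2 \<omega> \<noteq> \<infinity>" "n \<ge> 1"
  shows "(norm (D n \<omega>))\<^sup>2 \<le> S \<omega>"
proof -
  have "ennreal ((norm (D n \<omega>))\<^sup>2) \<le> Sup2 \<omega>"
    unfolding Sup2_def using assms(2) by (intro SUP_upper) auto
  then have "enn2real (ennreal ((norm (D n \<omega>))\<^sup>2)) \<le> enn2real (Sup2 \<omega>)"
    using assms(1) by (intro enn2real_mono) (auto simp: less_top)
  then show ?thesis unfolding S_def by simp
qed

lemma D_le_S':
  assumes "Sup2 \<omega> \<noteq> \<infinity>" "n \<ge> 1" "m \<ge> 1"
  shows "norm (D n \<omega>) * norm (D m \<omega>) \<le> S \<omega>"
proof -
  have "norm (D n \<omega>) * norm (D m \<omega>) \<le> ((norm (D n \<omega>))\<^sup>2 + (norm (D m \<omega>))\<^sup>2) / 2"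
    using sum_squares_bound[of "norm (D n \<omega>)" "norm (D m \<omega>)"] by (simp add: power2_eq_square)
  also have "\<dots> \<le> S \<omega>" using D_le_S[OF assms(1,2)] D_le_S[OF assms(1,3)] by simp
  finally show ?thesis .
qed

lemma D_le_S1:
  assumes "Sup2 \<omega> \<noteq> \<infinity>" "n \<ge> 1"
  shows "norm (D n \<omega>) \<le> 1 + S \<omega>"
proof -
  have "norm (D n \<omega>) \<le> 1 + (norm (D n \<omega>))\<^sup>2"
  proof (cases "norm (D n \<omega>) \<le> 1")
    case True then show ?thesis by (simp add: add_increasing2)
  next
    case False
    then have "norm (D n \<omega>) * 1 \<le> norm (D n \<omega>) * norm (D n \<omega>)" by (intro mult_left_mono) auto
    then show ?thesis by (simp add: power2_eq_square)
  qed
  then show ?thesis using D_le_S[OF assms] by simp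
qed

end

context sa begin

interpretation prob_space M by (rule ps)

definition good :: "'a \<Rightarrow> bool" where
  "good \<omega> \<longleftrightarrow> (\<forall>n\<ge>1. \<Theta> n \<omega> = \<Theta> (n - 1) \<omega> + \<gamma> n \<omega> *\<^sub>R g (\<Theta> (n - 1) \<omega>) + \<gamma> n \<omega> *\<^sub>R D n \<omega>)
     \<and> (\<forall>n\<ge>1. \<gamma> (Suc n) \<omega> \<le> \<gamma> n \<omega>) \<and> limsup (\<lambda>n. ereal (\<gamma> n \<omega>)) = 0
     \<and> (\<Sum>n. ennreal \<bar>\<gamma> (Suc n) \<omega>\<bar>) = \<infinity> \<and> Sup2 \<omega> \<noteq> \<infinity>"

lemma AE_good: "AE \<omega> in M. good \<omega>"
proof -
  have 1: "AE \<omega> in M. \<forall>n. n \<ge> 1 \<longrightarrow> \<Theta> n \<omega> = \<Theta> (n - 1) \<omega> + \<gamma> n \<omega> *\<^sub>R g (\<Theta> (n - 1) \<omega>) + \<gamma> n \<omega> *\<^sub>R D n \<omega>"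
    unfolding AE_all_countable
  proof
    fix n :: nat show "AE \<omega> in M. n \<ge> 1 \<longrightarrow> \<Theta> n \<omega> = \<Theta> (n - 1) \<omega> + \<gamma> n \<omega> *\<^sub>R g (\<Theta> (n - 1) \<omega>) + \<gamma> n \<omega> *\<^sub>R D n \<omega>"
      using recur[of n] by (cases "n \<ge> 1") auto
  qed
  have 2: "AE \<omega> in M. \<forall>n. n \<ge> 1 \<longrightarrow> \<gamma> (Suc n) \<omega> \<le> \<gamma> n \<omega>"
    unfolding AE_all_countable
  proof
    fix n :: nat show "AE \<omega> in M. n \<ge> 1 \<longrightarrow> \<gamma> (Suc n) \<omega> \<le> \<gamma> n \<omega>"
      using gam_mono[of n] by (cases "n \<ge> 1") auto
  qed
  show ?thesis using 1 2 gam_limsup gam_sum Sup2_fin unfolding good_def by eventually_elim auto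
qed

lemma good_nn: "good \<omega> \<Longrightarrow> n \<ge> 1 \<Longrightarrow> 0 \<le> \<gamma> n \<omega>"
proof (rule ccontr)
  assume G: "good \<omega>" and n: "n \<ge> 1" and neg: "\<not> 0 \<le> \<gamma> n \<omega>"
  have mono: "\<And>k. k \<ge> 1 \<Longrightarrow> \<gamma> (Suc k) \<omega> \<le> \<gamma> k \<omega>" using G unfolding good_def by auto
  have "\<forall>\<^sub>F k in sequentially. ereal (\<gamma> k \<omega>) \<le> ereal (\<gamma> n \<omega>)"
    unfolding eventually_sequentially using dec_from1[of "\<lambda>k. \<gamma> k \<omega>", OF mono n] by auto
  then have "limsup (\<lambda>k. ereal (\<gamma> k \<omega>)) \<le> ereal (\<gamma> n \<omega>)" by (rule Limsup_bounded)
  moreover have "limsup (\<lambda>k. ereal (\<gamma> k \<omega>)) = 0" using G unfolding good_def by auto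
  ultimately show False using neg by (simp add: zero_ereal_def)
qed

lemma good_mono: "good \<omega> \<Longrightarrow> n \<ge> 1 \<Longrightarrow> \<gamma> (Suc n) \<omega> \<le> \<gamma> n \<omega>"
  unfolding good_def by auto

lemma good_lim: "good \<omega> \<Longrightarrow> (\<lambda>n. \<gamma> n \<omega>) \<longlonglongrightarrow> 0"
proof (rule order_tendstoI)
  fix e :: real assume G: "good \<omega>" and "e < 0"
  then show "\<forall>\<^sub>F n in sequentially. e < \<gamma> n \<omega>"
    unfolding eventually_sequentially using good_nn[OF G] by (intro exI[of _ 1]) force
next
  fix e :: real assume G: "good \<omega>" and e: "0 < e"
  have "limsup (\<lambda>k. ereal (\<gamma> k \<omega>)) < ereal e" using G e unfolding good_def by auto
  then have "\<forall>\<^sub>F n in sequentially. ereal (\<gamma> n \<omega>) < ereal e" by (rule Limsup_lessD)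
  then show "\<forall>\<^sub>F n in sequentially. \<gamma> n \<omega> < e" by simp
qed

lemma s_mono: "good \<omega> \<Longrightarrow> m \<le> n \<Longrightarrow> s m \<omega> \<le> s n \<omega>"
proof (induction n)
  case 0 then show ?case by simp
next
  case (Suc n)
  show ?case
  proof (cases "m = Suc n")
    case True then show ?thesis by simp
  next
    case False
    then have "s m \<omega> \<le> s n \<omega>" using Suc by simp
    then show ?thesis using good_nn[OF Suc.prems(1), of "Suc n"] by (simp add: s_Suc)
  qed
qed

lemma good_unb: "good \<omega> \<Longrightarrow> \<exists>n. B \<le> s n \<omega>"
proof (rule ccontr)
  assume G: "good \<omega>" and "\<not> (\<exists>n. B \<le> s n \<omega>)"
  then have lt: "\<And>n. s n \<omega> < B" by (simp add: not_le)
  have eq: "(\<Sum>k<n. ennreal \<bar>\<gamma> (Suc k) \<omega>\<bar>) = ennreal (s n \<omega>)" for n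
  proof (induction n)
    case 0 then show ?case by simp
  next
    case (Suc n)
    have g0: "0 \<le> \<gamma> (Suc n) \<omega>" using good_nn[OF G, of "Suc n"] by simp
    have s0: "0 \<le> s n \<omega>" using s_mono[OF G, of 0 n] by simp
    have "(\<Sum>k<Suc n. ennreal \<bar>\<gamma> (Suc k) \<omega>\<bar>) = (\<Sum>k<n. ennreal \<bar>\<gamma> (Suc k) \<omega>\<bar>) + ennreal \<bar>\<gamma> (Suc n) \<omega>\<bar>"
      by (rule sum.lessThan_Suc)
    also have "\<dots> = ennreal (s n \<omega>) + ennreal (\<gamma> (Suc n) \<omega>)"
      using Suc.IH g0 by simp
    also have "\<dots> = ennreal (s (Suc n) \<omega>)"
      unfolding s_Suc using ennreal_plus[OF s0 g0] by simp
    finally show ?case .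
  qed
  have "(\<Sum>n. ennreal \<bar>\<gamma> (Suc n) \<omega>\<bar>) = (SUP n. ennreal (s n \<omega>))"
    unfolding suminf_eq_SUP eq ..
  also have "\<dots> \<le> ennreal B" using lt by (intro SUP_least ennreal_leI less_imp_le)
  finally have "(\<Sum>n. ennreal \<bar>\<gamma> (Suc n) \<omega>\<bar>) \<le> ennreal B" .
  moreover have "(\<Sum>n. ennreal \<bar>\<gamma> (Suc n) \<omega>\<bar>) = \<infinity>" using G unfolding good_def by blast
  ultimately have "\<infinity> \<le> ennreal B" by simp
  then show False by (simp add: top_unique)
qed

lemma hit_def': "hit_index \<gamma> t \<omega> = (LEAST n. t \<le> s n \<omega>)"
  unfolding hit_index_def s_def Inf_nat_def by simp

lemma hit_meas[measurable]: "(\<lambda>\<omega>. hit_index \<gamma> t \<omega>) \<in> measurable M (count_space UNIV)"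
  unfolding hit_def' by measurable

lemma hit_ge: "good \<omega> \<Longrightarrow> t \<le> s (hit_index \<gamma> t \<omega>) \<omega>"
proof -
  assume G: "good \<omega>"
  obtain n where "t \<le> s n \<omega>" using good_unb[OF G] by blast
  then show ?thesis unfolding hit_def' by (rule LeastI)
qed

lemma hit_lt: "k < hit_index \<gamma> t \<omega> \<Longrightarrow> s k \<omega> < t"
proof -
  assume "k < hit_index \<gamma> t \<omega>"
  then have "\<not> t \<le> s k \<omega>" unfolding hit_def' by (rule not_less_Least)
  then show ?thesis by linarith
qed

lemma hit_le: "t \<le> s n \<omega> \<Longrightarrow> hit_index \<gamma> t \<omega> \<le> n"
  unfolding hit_def' by (rule Least_le)

lemma hit_pos: "good \<omega> \<Longrightarrow> 0 < t \<Longrightarrow> 1 \<le> hit_index \<gamma> t \<omega>"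
proof (rule ccontr)
  assume "good \<omega>" "0 < t" "\<not> 1 \<le> hit_index \<gamma> t \<omega>"
  then have "hit_index \<gamma> t \<omega> = 0" by simp
  then show False using hit_ge[OF \<open>good \<omega>\<close>, of t] \<open>0 < t\<close> by simp
qed

lemma hit_prev: "good \<omega> \<Longrightarrow> 0 < t \<Longrightarrow> s (hit_index \<gamma> t \<omega> - 1) \<omega> < t"
  using hit_pos[of \<omega> t] by (intro hit_lt) auto

lemma s_lt_hit: "good \<omega> \<Longrightarrow> s k \<omega> < t \<Longrightarrow> k < hit_index \<gamma> t \<omega>"
proof (rule ccontr)
  assume G: "good \<omega>" and lt: "s k \<omega> < t" and "\<not> k < hit_index \<gamma> t \<omega>"
  then have "hit_index \<gamma> t \<omega> \<le> k" by simp
  then have "s (hit_index \<gamma> t \<omega>) \<omega> \<le> s k \<omega>" by (rule s_mono[OF G])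
  then show False using hit_ge[OF G, of t] lt by linarith
qed

end

lemma step_ineq:
  fixes x y z :: "'d::real_inner" and \<gamma> c W :: real
  assumes g0: "\<gamma> \<ge> 0" and dir: "inner x y \<le> - c * (norm x)\<^sup>2" and W: "W \<ge> 0"
  shows "W * (norm (x + \<gamma> *\<^sub>R y + \<gamma> *\<^sub>R z))\<^sup>2 \<le> W * exp (-2*c*\<gamma>) * (norm x)\<^sup>2
           + 2*\<gamma>*W*inner x z + 2*\<gamma>\<^sup>2*W*((norm y)\<^sup>2 + (norm z)\<^sup>2)"
proof -
  have e0: "inner (x + a) (x + a) = inner x x + 2 * inner x a + inner a a" for a :: 'd
    by (simp add: inner_add_left inner_add_right inner_commute[of a x])
  have e: "(norm (x + \<gamma> *\<^sub>R y + \<gamma> *\<^sub>R z))\<^sup>2 = (norm x)\<^sup>2 + 2*\<gamma>*inner x y + 2*\<gamma>*inner x z + \<gamma>\<^sup>2*(norm (y+z))\<^sup>2"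
  proof -
    have "x + \<gamma> *\<^sub>R y + \<gamma> *\<^sub>R z = x + \<gamma> *\<^sub>R (y + z)" by (simp add: scaleR_right_distrib)
    then have "(norm (x + \<gamma> *\<^sub>R y + \<gamma> *\<^sub>R z))\<^sup>2 = inner (x + \<gamma> *\<^sub>R (y + z)) (x + \<gamma> *\<^sub>R (y + z))"
      by (metis power2_norm_eq_inner)
    also have "\<dots> = inner x x + 2 * inner x (\<gamma> *\<^sub>R (y + z)) + inner (\<gamma> *\<^sub>R (y + z)) (\<gamma> *\<^sub>R (y + z))"
      by (rule e0)
    also have "\<dots> = inner x x + 2*\<gamma>*inner x y + 2*\<gamma>*inner x z + \<gamma>\<^sup>2 * inner (y+z) (y+z)"
      by (simp add: inner_add_right power2_eq_square distrib_left)
    finally show ?thesis by (simp add: power2_norm_eq_inner)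
  qed
  define X where "X = (norm x)\<^sup>2"
  define E where "E = exp (-2*c*\<gamma>)"
  define R where "R = (norm y)\<^sup>2 + (norm z)\<^sup>2"
  have yz: "(norm (y+z))\<^sup>2 \<le> 2*R"
  proof -
    have "norm (y+z) \<le> norm y + norm z" by (rule norm_triangle_ineq)
    then have "(norm (y+z))\<^sup>2 \<le> (norm y + norm z)\<^sup>2" by (rule power_mono[OF _ norm_ge_zero])
    moreover have "(norm y + norm z)\<^sup>2 \<le> 2*R"
      unfolding power2_sum R_def using sum_squares_bound[of "norm y" "norm z"] by (simp add: algebra_simps)
    ultimately show ?thesis by linarith
  qed
  have d: "2*\<gamma>*inner x y \<le> 2*\<gamma>*(- c * X)" unfolding X_def using dir g0 by (intro mult_left_mono) auto
  have d2: "2*\<gamma>*(- c * X) = - (2*c*\<gamma>*X)" by (simp add: mult_ac)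
  have ex: "(1 - 2*c*\<gamma>) * X \<le> E * X"
    unfolding E_def X_def using exp_ge_add_one_self[of "-2*c*\<gamma>"] by (intro mult_right_mono) auto
  have ex2: "(1 - 2*c*\<gamma>) * X = X - 2*c*\<gamma>*X" by (simp add: left_diff_distrib)
  have q: "\<gamma>\<^sup>2*(norm (y+z))\<^sup>2 \<le> \<gamma>\<^sup>2*(2*R)" using yz by (intro mult_left_mono) auto
  have q2: "\<gamma>\<^sup>2*(2*R) = 2*\<gamma>\<^sup>2*R" by (simp add: mult_ac)
  have d': "2*\<gamma>*inner x y \<le> - (2*c*\<gamma>*X)" using d d2 by linarith
  have ex': "X - 2*c*\<gamma>*X \<le> E*X" using ex ex2 by linarith
  have q': "\<gamma>\<^sup>2*(norm (y+z))\<^sup>2 \<le> 2*\<gamma>\<^sup>2*R" using q q2 by linarith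
  have main: "(norm (x + \<gamma> *\<^sub>R y + \<gamma> *\<^sub>R z))\<^sup>2 \<le> E*X + 2*\<gamma>*inner x z + 2*\<gamma>\<^sup>2*R"
    unfolding e X_def[symmetric] using d' ex' q' by linarith
  have "W * (norm (x + \<gamma> *\<^sub>R y + \<gamma> *\<^sub>R z))\<^sup>2 \<le> W * (E*X + 2*\<gamma>*inner x z + 2*\<gamma>\<^sup>2*R)"
    using main W by (rule mult_left_mono)
  also have "\<dots> = W * E * X + 2*\<gamma>*W*inner x z + 2*\<gamma>\<^sup>2*W*R" by (simp add: distrib_left mult_ac)
  finally show ?thesis unfolding X_def E_def R_def .
qed

lemma tele_gen:
  fixes u a :: "nat \<Rightarrow> real"
  assumes "\<And>n. 1 \<le> n \<Longrightarrow> n \<le> N \<Longrightarrow> u n \<le> u (n - 1) + a n"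
  shows "u N \<le> u 0 + (\<Sum>n\<in>{1..N}. a n)"
  using assms
proof (induction N)
  case 0 then show ?case by simp
next
  case (Suc N)
  have "u (Suc N) \<le> u N + a (Suc N)" using Suc.prems[of "Suc N"] by simp
  also have "\<dots> \<le> u 0 + (\<Sum>n\<in>{1..N}. a n) + a (Suc N)" using Suc.IH Suc.prems by simp
  finally show ?case by simp
qed

lemma loc_bdd:
  fixes g :: "'d::euclidean_space \<Rightarrow> 'e::real_normed_vector"
  assumes "\<And>x. \<exists>e>0. bounded (g ` ball x e)"
  shows "\<exists>G. \<forall>x. norm x \<le> r \<longrightarrow> norm (g x) \<le> G"
proof -
  obtain e where e: "\<And>x. e x > 0 \<and> bounded (g ` ball x (e x))" using assms by metis
  have "compact (cball (0::'d) r)" by simp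
  moreover have "\<And>x. x \<in> cball 0 r \<Longrightarrow> open (ball x (e x))" by simp
  moreover have "cball 0 r \<subseteq> (\<Union>x\<in>cball 0 r. ball x (e x))" using e by force
  ultimately obtain C where C: "C \<subseteq> cball 0 r" "finite C" "cball 0 r \<subseteq> (\<Union>x\<in>C. ball x (e x))"
    by (rule compactE_image)
  have "bounded (\<Union>x\<in>C. g ` ball x (e x))" using C(2) e by (intro bounded_UN) auto
  then obtain G where G: "\<And>y. y \<in> (\<Union>x\<in>C. g ` ball x (e x)) \<Longrightarrow> norm y \<le> G"
    unfolding bounded_iff by blast
  show ?thesis
  proof (intro exI allI impI)
    fix x :: 'd assume "norm x \<le> r"
    then have "x \<in> cball 0 r" by simp
    then obtain x' where "x' \<in> C" "x \<in> ball x' (e x')" using C(3) by blast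
    then show "norm (g x) \<le> G" using G by blast
  qed
qed

context sa begin

definition ee :: "nat \<Rightarrow> 'a \<Rightarrow> 'd" where "ee n \<omega> = \<Theta> n \<omega> - \<theta>0"
definition w :: "nat \<Rightarrow> 'a \<Rightarrow> real" where "w n \<omega> = exp (2*c* s n \<omega>)"
definition gb :: "real \<Rightarrow> real" where "gb r = (SOME G. \<forall>x. norm x \<le> r \<longrightarrow> norm (g x) \<le> G)"

lemma gb: "norm x \<le> r \<Longrightarrow> norm (g x) \<le> gb r"
  using someI_ex[OF loc_bdd[OF g_lb, of r]] unfolding gb_def by blast

definition cond :: "real \<Rightarrow> real \<Rightarrow> nat \<Rightarrow> 'a \<Rightarrow> bool" where
  "cond j t n \<omega> \<longleftrightarrow> s (n-1) \<omega> < t \<and> norm (\<Theta> (n-1) \<omega>) \<le> j \<and> 0 \<le> \<gamma> n \<omega> \<and> \<gamma> n \<omega> \<le> \<gamma> 1 \<omega> \<and> \<gamma> 1 \<omega> \<le> j"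

definition h :: "real \<Rightarrow> real \<Rightarrow> nat \<Rightarrow> 'a \<Rightarrow> 'd" where
  "h j t n \<omega> = (if cond j t n \<omega> then 2 * \<gamma> n \<omega> * w n \<omega> else 0) *\<^sub>R ee (n-1) \<omega>"

definition Z :: "real \<Rightarrow> real \<Rightarrow> nat \<Rightarrow> 'a \<Rightarrow> real" where
  "Z j t n0 \<omega> = exp (-2*c*t) * (\<Sum>n\<in>{1..n0}. inner (h j t n \<omega>) (D n \<omega>))"

definition V :: "real \<Rightarrow> real \<Rightarrow> 'a \<Rightarrow> real" where
  "V j t \<omega> = exp (-2*c*t) * ((norm (ee 0 \<omega>))\<^sup>2
      + 2*((gb j)\<^sup>2 + S \<omega>) * (\<Sum>n\<in>{1..hit_index \<gamma> t \<omega>}. (\<gamma> n \<omega>)\<^sup>2 * w n \<omega>))"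

definition inE :: "real \<Rightarrow> 'a \<Rightarrow> bool" where
  "inE j \<omega> \<longleftrightarrow> (\<forall>k. norm (\<Theta> k \<omega>) \<le> j) \<and> \<gamma> 1 \<omega> \<le> j"

lemma w_step: "n \<ge> 1 \<Longrightarrow> w n \<omega> * exp (-2*c*\<gamma> n \<omega>) = w (n-1) \<omega>"
  by (cases n) (auto simp: w_def s_Suc exp_add[symmetric] algebra_simps)

lemma path_step:
  assumes G: "good \<omega>" and n: "n \<ge> 1"
  shows "w n \<omega> * (norm (ee n \<omega>))\<^sup>2 \<le> w (n-1) \<omega> * (norm (ee (n-1) \<omega>))\<^sup>2
     + (2*\<gamma> n \<omega>*w n \<omega>*inner (ee (n-1) \<omega>) (D n \<omega>)
        + 2*(\<gamma> n \<omega>)\<^sup>2*w n \<omega>*((norm (g (\<Theta> (n-1) \<omega>)))\<^sup>2 + (norm (D n \<omega>))\<^sup>2))"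
proof -
  have rec: "\<Theta> n \<omega> = \<Theta> (n - 1) \<omega> + \<gamma> n \<omega> *\<^sub>R g (\<Theta> (n - 1) \<omega>) + \<gamma> n \<omega> *\<^sub>R D n \<omega>"
    using G n unfolding good_def by blast
  have en: "ee n \<omega> = ee (n-1) \<omega> + \<gamma> n \<omega> *\<^sub>R g (\<Theta> (n - 1) \<omega>) + \<gamma> n \<omega> *\<^sub>R D n \<omega>"
    unfolding ee_def rec by (simp add: algebra_simps)
  have dir: "inner (ee (n-1) \<omega>) (g (\<Theta> (n - 1) \<omega>)) \<le> - c * (norm (ee (n-1) \<omega>))\<^sup>2"
    unfolding ee_def by (rule g_dir)
  have "w n \<omega> * (norm (ee n \<omega>))\<^sup>2 \<le> w n \<omega> * exp (-2*c*\<gamma> n \<omega>) * (norm (ee (n-1) \<omega>))\<^sup>2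
     + 2*\<gamma> n \<omega>*w n \<omega>*inner (ee (n-1) \<omega>) (D n \<omega>)
     + 2*(\<gamma> n \<omega>)\<^sup>2*w n \<omega>*((norm (g (\<Theta> (n-1) \<omega>)))\<^sup>2 + (norm (D n \<omega>))\<^sup>2)"
    unfolding en by (rule step_ineq[OF good_nn[OF G n] dir]) (simp add: w_def)
  then show ?thesis unfolding w_step[OF n] by simp
qed

end

context sa begin

lemma w0[simp]: "w 0 \<omega> = 1" unfolding w_def by simp
lemma w_pos: "0 < w n \<omega>" unfolding w_def by simp

lemma path_main:
  assumes G: "good \<omega>" and E: "inE j \<omega>" and t: "0 < t" and Nn0: "hit_index \<gamma> t \<omega> \<le> n0"
  shows "(norm (ee (hit_index \<gamma> t \<omega>) \<omega>))\<^sup>2 \<le> V j t \<omega> + Z j t n0 \<omega>"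
proof -
  define N where "N = hit_index \<gamma> t \<omega>"
  define A where "A n = 2*\<gamma> n \<omega>*w n \<omega>*inner (ee (n-1) \<omega>) (D n \<omega>)" for n
  define B where "B n = 2*(\<gamma> n \<omega>)\<^sup>2*w n \<omega>*((norm (g (\<Theta> (n-1) \<omega>)))\<^sup>2 + (norm (D n \<omega>))\<^sup>2)" for n
  have tele: "w N \<omega> * (norm (ee N \<omega>))\<^sup>2 \<le> w 0 \<omega> * (norm (ee 0 \<omega>))\<^sup>2 + (\<Sum>n\<in>{1..N}. A n + B n)"
    by (rule tele_gen[where u="\<lambda>n. w n \<omega> * (norm (ee n \<omega>))\<^sup>2"])
       (use path_step[OF G] in \<open>auto simp: A_def B_def\<close>)
  have sup2: "Sup2 \<omega> \<noteq> \<infinity>" using G unfolding good_def by blast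
  have sumB: "(\<Sum>n\<in>{1..N}. B n) \<le> 2*((gb j)\<^sup>2 + S \<omega>) * (\<Sum>n\<in>{1..N}. (\<gamma> n \<omega>)\<^sup>2 * w n \<omega>)"
  proof -
    have "(\<Sum>n\<in>{1..N}. B n) \<le> (\<Sum>n\<in>{1..N}. 2*((gb j)\<^sup>2 + S \<omega>) * ((\<gamma> n \<omega>)\<^sup>2 * w n \<omega>))"
    proof (rule sum_mono)
      fix n assume n: "n \<in> {1..N}"
      have "norm (\<Theta> (n-1) \<omega>) \<le> j" using E unfolding inE_def by blast
      then have "norm (g (\<Theta> (n-1) \<omega>)) \<le> gb j" by (rule gb)
      then have 1: "(norm (g (\<Theta> (n-1) \<omega>)))\<^sup>2 \<le> (gb j)\<^sup>2" by (rule power_mono[OF _ norm_ge_zero])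
      have 2: "(norm (D n \<omega>))\<^sup>2 \<le> S \<omega>" using D_le_S[OF sup2] n by simp
      have 3: "0 \<le> 2*(\<gamma> n \<omega>)\<^sup>2*w n \<omega>" using w_pos[of n \<omega>] by simp
      have "B n \<le> 2*(\<gamma> n \<omega>)\<^sup>2*w n \<omega> * ((gb j)\<^sup>2 + S \<omega>)"
        unfolding B_def using 1 2 3 by (intro mult_left_mono) auto
      moreover have "2*(\<gamma> n \<omega>)\<^sup>2*w n \<omega> * ((gb j)\<^sup>2 + S \<omega>) = 2*((gb j)\<^sup>2 + S \<omega>) * ((\<gamma> n \<omega>)\<^sup>2 * w n \<omega>)"
        by (simp only: mult_ac)
      ultimately show "B n \<le> 2*((gb j)\<^sup>2 + S \<omega>) * ((\<gamma> n \<omega>)\<^sup>2 * w n \<omega>)" by simp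
    qed
    also have "\<dots> = 2*((gb j)\<^sup>2 + S \<omega>) * (\<Sum>n\<in>{1..N}. (\<gamma> n \<omega>)\<^sup>2 * w n \<omega>)"
      by (simp add: sum_distrib_left)
    finally show ?thesis .
  qed
  have sumA: "(\<Sum>n\<in>{1..N}. A n) = (\<Sum>n\<in>{1..n0}. inner (h j t n \<omega>) (D n \<omega>))"
  proof -
    have eq1: "inner (h j t n \<omega>) (D n \<omega>) = A n" if n: "n \<in> {1..N}" for n
    proof -
      have "s (n-1) \<omega> < t" using n unfolding N_def by (intro hit_lt) auto
      moreover have "norm (\<Theta> (n-1) \<omega>) \<le> j" using E unfolding inE_def by blast
      moreover have "0 \<le> \<gamma> n \<omega>" using good_nn[OF G] n by simp
      moreover have "\<gamma> n \<omega> \<le> \<gamma> 1 \<omega>" using dec_from1[of "\<lambda>k. \<gamma> k \<omega>", OF good_mono[OF G]] n by simp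
      moreover have "\<gamma> 1 \<omega> \<le> j" using E unfolding inE_def by blast
      ultimately have "cond j t n \<omega>" unfolding cond_def by blast
      then show ?thesis unfolding h_def A_def by (simp add: mult_ac)
    qed
    have eq2: "inner (h j t n \<omega>) (D n \<omega>) = 0" if n: "n \<in> {N<..n0}" for n
    proof -
      have "t \<le> s N \<omega>" unfolding N_def by (rule hit_ge[OF G])
      also have "s N \<omega> \<le> s (n-1) \<omega>" using n by (intro s_mono[OF G]) auto
      finally have "\<not> cond j t n \<omega>" unfolding cond_def by simp
      then show ?thesis unfolding h_def by simp
    qed
    have "{1..n0} = {1..N} \<union> {N<..n0}" using Nn0 unfolding N_def by auto
    then have "(\<Sum>n\<in>{1..n0}. inner (h j t n \<omega>) (D n \<omega>))
        = (\<Sum>n\<in>{1..N}. inner (h j t n \<omega>) (D n \<omega>)) + (\<Sum>n\<in>{N<..n0}. inner (h j t n \<omega>) (D n \<omega>))"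
      by (simp add: sum.union_disjoint ivl_disj_int)
    also have "\<dots> = (\<Sum>n\<in>{1..N}. A n)" using eq1 eq2 by simp
    finally show ?thesis by simp
  qed
  have wN: "1 \<le> exp (-2*c*t) * w N \<omega>"
  proof -
    have "t \<le> s N \<omega>" unfolding N_def by (rule hit_ge[OF G])
    then have "0 \<le> 2*c*(s N \<omega> - t)" using c_pos by simp
    then have "1 \<le> exp (2*c*(s N \<omega> - t))" by simp
    also have "exp (2*c*(s N \<omega> - t)) = exp (-2*c*t) * w N \<omega>"
      unfolding w_def by (simp add: exp_add[symmetric] algebra_simps)
    finally show ?thesis .
  qed
  have "(norm (ee N \<omega>))\<^sup>2 \<le> exp (-2*c*t) * w N \<omega> * (norm (ee N \<omega>))\<^sup>2"
    using wN mult_right_mono[OF wN zero_le_power2[of "norm (ee N \<omega>)"]] by simp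
  also have "\<dots> = exp (-2*c*t) * (w N \<omega> * (norm (ee N \<omega>))\<^sup>2)" by simp
  also have "\<dots> \<le> exp (-2*c*t) * ((norm (ee 0 \<omega>))\<^sup>2 + (\<Sum>n\<in>{1..N}. A n) + (\<Sum>n\<in>{1..N}. B n))"
    using tele by (intro mult_left_mono) (auto simp: sum.distrib)
  also have "\<dots> \<le> exp (-2*c*t) * ((norm (ee 0 \<omega>))\<^sup>2 + (\<Sum>n\<in>{1..N}. A n)
       + 2*((gb j)\<^sup>2 + S \<omega>) * (\<Sum>n\<in>{1..N}. (\<gamma> n \<omega>)\<^sup>2 * w n \<omega>))"
    using sumB by (intro mult_left_mono) auto
  also have "\<dots> = V j t \<omega> + Z j t n0 \<omega>"
    unfolding V_def Z_def sumA N_def[symmetric] by (simp add: algebra_simps)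
  finally show ?thesis unfolding N_def .
qed

end

context sa begin

interpretation prob_space M by (rule ps)

lemma sfs: "sigma_finite_subalgebra M (F k)"
proof -
  have "finite_measure (restr_to_subalg M (F k))"
    using finite_measure_restr_to_subalg subF finite_emeasure_space finite_measureI
    unfolding infinity_ennreal_def by blast
  then have "sigma_finite_measure (restr_to_subalg M (F k))"
    unfolding finite_measure_def by simp
  then show ?thesis unfolding sigma_finite_subalgebra_def using subF by simp
qed

lemma orth:
  fixes f :: "'a \<Rightarrow> real" and H :: "'a \<Rightarrow> 'd"
  assumes n: "n \<ge> 1" and fm: "f \<in> borel_measurable (F (n-1))" and Hm: "H \<in> borel_measurable (F (n-1))"
    and Hb: "\<And>\<omega>. norm (H \<omega>) \<le> C"
    and fi: "integrable M (\<lambda>\<omega>. \<bar>f \<omega>\<bar> * norm (D n \<omega>))"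
  shows "integrable M (\<lambda>\<omega>. f \<omega> * inner (H \<omega>) (D n \<omega>))"
        "(\<integral>\<omega>. f \<omega> * inner (H \<omega>) (D n \<omega>) \<partial>M) = 0"
proof -
  have fM[measurable]: "f \<in> borel_measurable M" using F_to_M[OF fm] .
  have HM[measurable]: "H \<in> borel_measurable M" using F_to_M[OF Hm] .
  have DM[measurable]: "D n \<in> borel_measurable M" using D_measM[OF n] .
  have C0: "0 \<le> C" using norm_ge_zero[of "H undefined"] Hb[of undefined] by linarith
  have eq: "f \<omega> * inner (H \<omega>) (D n \<omega>) = (\<Sum>b\<in>Basis. (f \<omega> * inner (H \<omega>) b) * inner (D n \<omega>) b)" for \<omega>
  proof -
    have "inner (H \<omega>) (D n \<omega>) = (\<Sum>b\<in>Basis. inner (H \<omega>) b * inner (D n \<omega>) b)" by (rule euclidean_inner)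
    then show ?thesis by (simp add: sum_distrib_left mult.assoc)
  qed
  have ib: "integrable M (\<lambda>\<omega>. (f \<omega> * inner (H \<omega>) b) * inner (D n \<omega>) b)" if b: "b \<in> Basis" for b
  proof -
    have i1: "integrable M (\<lambda>\<omega>. C * (\<bar>f \<omega>\<bar> * norm (D n \<omega>)))" using fi by simp
    have m1: "(\<lambda>\<omega>. (f \<omega> * inner (H \<omega>) b) * inner (D n \<omega>) b) \<in> borel_measurable M" by measurable
    have "AE \<omega> in M. norm ((f \<omega> * inner (H \<omega>) b) * inner (D n \<omega>) b) \<le> norm (C * (\<bar>f \<omega>\<bar> * norm (D n \<omega>)))"
    proof (intro AE_I2)
      fix \<omega>
      have 1: "\<bar>inner (H \<omega>) b\<bar> \<le> C" using Cauchy_Schwarz_ineq2[of "H \<omega>" b] Hb[of \<omega>] b by simp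
      have 2: "\<bar>inner (D n \<omega>) b\<bar> \<le> norm (D n \<omega>)" using Cauchy_Schwarz_ineq2[of "D n \<omega>" b] b by simp
      have "\<bar>inner (H \<omega>) b\<bar> * \<bar>inner (D n \<omega>) b\<bar> \<le> C * norm (D n \<omega>)"
        using 1 2 C0 by (intro mult_mono) auto
      then have "\<bar>f \<omega>\<bar> * (\<bar>inner (H \<omega>) b\<bar> * \<bar>inner (D n \<omega>) b\<bar>) \<le> \<bar>f \<omega>\<bar> * (C * norm (D n \<omega>))"
        by (intro mult_left_mono) auto
      moreover have "norm ((f \<omega> * inner (H \<omega>) b) * inner (D n \<omega>) b) = \<bar>f \<omega>\<bar> * (\<bar>inner (H \<omega>) b\<bar> * \<bar>inner (D n \<omega>) b\<bar>)"
        by (simp add: abs_mult)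
      moreover have "norm (C * (\<bar>f \<omega>\<bar> * norm (D n \<omega>))) = \<bar>f \<omega>\<bar> * (C * norm (D n \<omega>))"
        using C0 by (simp add: abs_mult)
      ultimately show "norm ((f \<omega> * inner (H \<omega>) b) * inner (D n \<omega>) b) \<le> norm (C * (\<bar>f \<omega>\<bar> * norm (D n \<omega>)))"
        by simp
    qed
    then show ?thesis by (rule Bochner_Integration.integrable_bound[OF i1 m1])
  qed
  have zb: "(\<integral>\<omega>. (f \<omega> * inner (H \<omega>) b) * inner (D n \<omega>) b \<partial>M) = 0" if b: "b \<in> Basis" for b
  proof -
    interpret sfs: sigma_finite_subalgebra M "F (n-1)" by (rule sfs)
    have fb: "(\<lambda>\<omega>. f \<omega> * inner (H \<omega>) b) \<in> borel_measurable (F (n-1))" using fm Hm by measurable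
    have "(\<integral>\<omega>. (f \<omega> * inner (H \<omega>) b) * inner (D n \<omega>) b \<partial>M)
        = (\<integral>\<omega>. (f \<omega> * inner (H \<omega>) b) * real_cond_exp M (F (n-1)) (\<lambda>\<omega>. inner (D n \<omega>) b) \<omega> \<partial>M)"
      by (rule sfs.real_cond_exp_intg(2)[symmetric, OF ib[OF b] fb]) measurable
    also have "\<dots> = (\<integral>\<omega>. 0 \<partial>M)"
      using cexp[OF n b] by (intro integral_cong_AE) auto
    finally show ?thesis by simp
  qed
  show "integrable M (\<lambda>\<omega>. f \<omega> * inner (H \<omega>) (D n \<omega>))"
    unfolding eq using ib by (intro Bochner_Integration.integrable_sum) auto
  show "(\<integral>\<omega>. f \<omega> * inner (H \<omega>) (D n \<omega>) \<partial>M) = 0"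
    unfolding eq using ib zb by (subst Bochner_Integration.integral_sum) auto
qed

lemma L2:
  fixes H :: "nat \<Rightarrow> 'a \<Rightarrow> 'd"
  assumes Hm: "\<And>n. n \<ge> 1 \<Longrightarrow> H n \<in> borel_measurable (F (n-1))"
    and Hb: "\<And>n \<omega>. norm (H n \<omega>) \<le> C"
  shows "integrable M (\<lambda>\<omega>. (\<Sum>n\<in>{1..N}. inner (H n \<omega>) (D n \<omega>))\<^sup>2) \<and>
    (\<integral>\<omega>. (\<Sum>n\<in>{1..N}. inner (H n \<omega>) (D n \<omega>))\<^sup>2 \<partial>M) = (\<Sum>n\<in>{1..N}. \<integral>\<omega>. (inner (H n \<omega>) (D n \<omega>))\<^sup>2 \<partial>M)"
proof (induction N)
  case 0 then show ?case by simp
next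
  case (Suc N)
  have C0: "0 \<le> C" using norm_ge_zero[of "H 0 undefined"] Hb[of 0 undefined] by linarith
  have HM[measurable]: "n \<ge> 1 \<Longrightarrow> H n \<in> borel_measurable M" for n using F_to_M[OF Hm] by blast
  define P where "P \<omega> = (\<Sum>n\<in>{1..N}. inner (H n \<omega>) (D n \<omega>))" for \<omega>
  define Y where "Y \<omega> = inner (H (Suc N) \<omega>) (D (Suc N) \<omega>)" for \<omega>
  have PF: "P \<in> borel_measurable (F N)"
  proof -
    have "(\<lambda>\<omega>. inner (H n \<omega>) (D n \<omega>)) \<in> borel_measurable (F N)" if n: "n \<in> {1..N}" for n
    proof -
      have n1: "n - 1 \<le> N" "1 \<le> n" "n \<le> N" using n by auto
      have "H n \<in> borel_measurable (F N)" by (rule F_mono_meas[OF n1(1) Hm[OF n1(2)]])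
      moreover have "D n \<in> borel_measurable (F N)" by (rule F_mono_meas[OF n1(3) D_meas[OF n1(2)]])
      ultimately show ?thesis by (rule borel_measurable_inner)
    qed
    then show ?thesis unfolding P_def by (rule borel_measurable_sum)
  qed
  have PM[measurable]: "P \<in> borel_measurable M" using F_to_M[OF PF] .
  have YM[measurable]: "Y \<in> borel_measurable M" unfolding Y_def by measurable
  have Pb: "\<bar>P \<omega>\<bar> \<le> C * (\<Sum>n\<in>{1..N}. norm (D n \<omega>))" for \<omega>
  proof -
    have "\<bar>P \<omega>\<bar> \<le> (\<Sum>n\<in>{1..N}. \<bar>inner (H n \<omega>) (D n \<omega>)\<bar>)" unfolding P_def by (rule sum_abs)
    also have "\<dots> \<le> (\<Sum>n\<in>{1..N}. C * norm (D n \<omega>))"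
    proof (rule sum_mono)
      fix n
      have "\<bar>inner (H n \<omega>) (D n \<omega>)\<bar> \<le> norm (H n \<omega>) * norm (D n \<omega>)" by (rule Cauchy_Schwarz_ineq2)
      also have "\<dots> \<le> C * norm (D n \<omega>)" using Hb by (intro mult_right_mono) auto
      finally show "\<bar>inner (H n \<omega>) (D n \<omega>)\<bar> \<le> C * norm (D n \<omega>)" .
    qed
    also have "\<dots> = C * (\<Sum>n\<in>{1..N}. norm (D n \<omega>))" by (simp add: sum_distrib_left)
    finally show ?thesis .
  qed
  have Yb: "\<bar>Y \<omega>\<bar> \<le> C * norm (D (Suc N) \<omega>)" for \<omega>
  proof -
    have "\<bar>Y \<omega>\<bar> \<le> norm (H (Suc N) \<omega>) * norm (D (Suc N) \<omega>)" unfolding Y_def by (rule Cauchy_Schwarz_ineq2)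
    also have "\<dots> \<le> C * norm (D (Suc N) \<omega>)" using Hb by (intro mult_right_mono) auto
    finally show ?thesis .
  qed
  have cross_int: "integrable M (\<lambda>\<omega>. \<bar>P \<omega>\<bar> * norm (D (Suc N) \<omega>))"
  proof -
    have i1: "integrable M (\<lambda>\<omega>. C * real N * S \<omega>)" using S_int by simp
    have "AE \<omega> in M. norm (\<bar>P \<omega>\<bar> * norm (D (Suc N) \<omega>)) \<le> norm (C * real N * S \<omega>)"
      using AE_good
    proof eventually_elim
      case (elim \<omega>)
      have sup2: "Sup2 \<omega> \<noteq> \<infinity>" using elim unfolding good_def by blast
      have "\<bar>P \<omega>\<bar> * norm (D (Suc N) \<omega>) \<le> C * (\<Sum>n\<in>{1..N}. norm (D n \<omega>)) * norm (D (Suc N) \<omega>)"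
        using Pb by (intro mult_right_mono) auto
      also have "\<dots> = C * (\<Sum>n\<in>{1..N}. norm (D n \<omega>) * norm (D (Suc N) \<omega>))"
        by (simp add: sum_distrib_right mult.assoc)
      also have "\<dots> \<le> C * (\<Sum>n\<in>{1..N}. S \<omega>)"
        using D_le_S'[OF sup2] C0 by (intro mult_left_mono sum_mono) auto
      also have "\<dots> = C * real N * S \<omega>" by simp
      finally show ?case using C0 S_nonneg[of \<omega>] by simp
    qed
    moreover have "(\<lambda>\<omega>. \<bar>P \<omega>\<bar> * norm (D (Suc N) \<omega>)) \<in> borel_measurable M" by measurable
    ultimately show ?thesis using Bochner_Integration.integrable_bound[OF i1] by blast
  qed
  have o1: "integrable M (\<lambda>\<omega>. P \<omega> * Y \<omega>)" "(\<integral>\<omega>. P \<omega> * Y \<omega> \<partial>M) = 0"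
    using orth[of "Suc N" P "H (Suc N)" C] PF Hm[of "Suc N"] Hb cross_int unfolding Y_def by auto
  have Y2: "integrable M (\<lambda>\<omega>. (Y \<omega>)\<^sup>2)"
  proof -
    have i1: "integrable M (\<lambda>\<omega>. C\<^sup>2 * S \<omega>)" using S_int by simp
    have "AE \<omega> in M. norm ((Y \<omega>)\<^sup>2) \<le> norm (C\<^sup>2 * S \<omega>)"
      using AE_good
    proof eventually_elim
      case (elim \<omega>)
      have sup2: "Sup2 \<omega> \<noteq> \<infinity>" using elim unfolding good_def by blast
      have "(Y \<omega>)\<^sup>2 = \<bar>Y \<omega>\<bar>\<^sup>2" by simp
      also have "\<dots> \<le> (C * norm (D (Suc N) \<omega>))\<^sup>2" using Yb by (intro power_mono) auto
      also have "\<dots> = C\<^sup>2 * (norm (D (Suc N) \<omega>))\<^sup>2" by (simp add: power_mult_distrib)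
      also have "\<dots> \<le> C\<^sup>2 * S \<omega>" using D_le_S[OF sup2, of "Suc N"] by (intro mult_left_mono) auto
      finally show ?case using S_nonneg[of \<omega>] by simp
    qed
    moreover have "(\<lambda>\<omega>. (Y \<omega>)\<^sup>2) \<in> borel_measurable M" by measurable
    ultimately show ?thesis using Bochner_Integration.integrable_bound[OF i1] by blast
  qed
  have IH1: "integrable M (\<lambda>\<omega>. (P \<omega>)\<^sup>2)" and IH2: "(\<integral>\<omega>. (P \<omega>)\<^sup>2 \<partial>M) = (\<Sum>n\<in>{1..N}. \<integral>\<omega>. (inner (H n \<omega>) (D n \<omega>))\<^sup>2 \<partial>M)"
    using Suc.IH unfolding P_def by auto
  have split: "(\<Sum>n\<in>{1..Suc N}. inner (H n \<omega>) (D n \<omega>))\<^sup>2 = (P \<omega>)\<^sup>2 + 2 * (P \<omega> * Y \<omega>) + (Y \<omega>)\<^sup>2" for \<omega>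
  proof -
    have "(\<Sum>n\<in>{1..Suc N}. inner (H n \<omega>) (D n \<omega>)) = P \<omega> + Y \<omega>" unfolding P_def Y_def by simp
    then show ?thesis by (simp add: power2_sum mult.assoc add_ac)
  qed
  have int: "integrable M (\<lambda>\<omega>. (P \<omega>)\<^sup>2 + 2 * (P \<omega> * Y \<omega>) + (Y \<omega>)\<^sup>2)"
    using IH1 o1(1) Y2 by auto
  have "(\<integral>\<omega>. (P \<omega>)\<^sup>2 + 2 * (P \<omega> * Y \<omega>) + (Y \<omega>)\<^sup>2 \<partial>M)
      = (\<integral>\<omega>. (P \<omega>)\<^sup>2 \<partial>M) + 2 * (\<integral>\<omega>. P \<omega> * Y \<omega> \<partial>M) + (\<integral>\<omega>. (Y \<omega>)\<^sup>2 \<partial>M)"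
  proof -
    have i12: "integrable M (\<lambda>\<omega>. (P \<omega>)\<^sup>2 + 2 * (P \<omega> * Y \<omega>))" using IH1 o1(1) by auto
    have "(\<integral>\<omega>. (P \<omega>)\<^sup>2 + 2 * (P \<omega> * Y \<omega>) + (Y \<omega>)\<^sup>2 \<partial>M)
        = (\<integral>\<omega>. (P \<omega>)\<^sup>2 + 2 * (P \<omega> * Y \<omega>) \<partial>M) + (\<integral>\<omega>. (Y \<omega>)\<^sup>2 \<partial>M)"
      by (rule Bochner_Integration.integral_add[OF i12 Y2])
    also have "(\<integral>\<omega>. (P \<omega>)\<^sup>2 + 2 * (P \<omega> * Y \<omega>) \<partial>M) = (\<integral>\<omega>. (P \<omega>)\<^sup>2 \<partial>M) + (\<integral>\<omega>. 2 * (P \<omega> * Y \<omega>) \<partial>M)"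
      using IH1 o1(1) by (intro Bochner_Integration.integral_add) auto
    also have "(\<integral>\<omega>. 2 * (P \<omega> * Y \<omega>) \<partial>M) = 2 * (\<integral>\<omega>. P \<omega> * Y \<omega> \<partial>M)"
      by (rule integral_mult_right_zero)
    finally show ?thesis .
  qed
  also have "\<dots> = (\<Sum>n\<in>{1..Suc N}. \<integral>\<omega>. (inner (H n \<omega>) (D n \<omega>))\<^sup>2 \<partial>M)"
    unfolding IH2 o1(2) by (simp add: Y_def)
  finally show ?case unfolding split using int by simp
qed

end

context sa begin

interpretation prob_space M by (rule ps)

lemma s_measF1: "s n \<in> borel_measurable (F (n-1))"
  unfolding s_def
proof (rule borel_measurable_sum)
  fix k assume k: "k \<in> {1..n}"
  then have "k - 1 \<le> n - 1" "1 \<le> k" by auto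
  then show "\<gamma> k \<in> borel_measurable (F (n-1))" by (intro F_mono_meas[OF _ gam_meas]) auto
qed

lemma w_measF1: "w n \<in> borel_measurable (F (n-1))"
  unfolding w_def using s_measF1[of n] by measurable

lemma h_meas: assumes n: "n \<ge> 1" shows "h j t n \<in> borel_measurable (F (n-1))"
proof -
  have [measurable]: "s (n-1) \<in> borel_measurable (F (n-1))" by (rule s_measF) simp
  have [measurable]: "w n \<in> borel_measurable (F (n-1))" by (rule w_measF1)
  have [measurable]: "\<gamma> n \<in> borel_measurable (F (n-1))" by (rule gam_meas[OF n])
  have [measurable]: "\<gamma> 1 \<in> borel_measurable (F (n-1))" using F_mono_meas[OF _ gam_meas[of 1]] by simp
  have [measurable]: "\<Theta> (n-1) \<in> borel_measurable (F (n-1))" by (rule Th_meas)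
  have [measurable]: "ee (n-1) \<in> borel_measurable (F (n-1))" unfolding ee_def by measurable
  show ?thesis unfolding h_def cond_def by measurable
qed

definition Cb :: "real \<Rightarrow> real \<Rightarrow> real" where
  "Cb j t = 2 * \<bar>j\<bar> * exp (2*c*(t + \<bar>j\<bar>)) * (\<bar>j\<bar> + norm \<theta>0)"

lemma ee_bound: "norm (\<Theta> k \<omega>) \<le> j \<Longrightarrow> norm (ee k \<omega>) \<le> \<bar>j\<bar> + norm \<theta>0"
  unfolding ee_def using norm_triangle_ineq4[of "\<Theta> k \<omega>" \<theta>0] by linarith

lemma s_step: "n \<ge> 1 \<Longrightarrow> s n \<omega> = s (n-1) \<omega> + \<gamma> n \<omega>"
  by (cases n) (auto simp: s_Suc)

lemma h_norm: "norm (h j t n \<omega>) = (if cond j t n \<omega> then 2 * \<gamma> n \<omega> * w n \<omega> * norm (ee (n-1) \<omega>) else 0)"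
  unfolding h_def cond_def using w_pos[of n \<omega>] by (auto simp: abs_mult)

lemma h_bound: "norm (h j t n \<omega>) \<le> Cb j t"
proof (cases "cond j t n \<omega>")
  case False
  have "0 \<le> Cb j t" unfolding Cb_def by simp
  then show ?thesis using False by (simp add: h_norm)
next
  case True
  then have c1: "s (n-1) \<omega> < t" and c2: "norm (\<Theta> (n-1) \<omega>) \<le> j" and c3: "0 \<le> \<gamma> n \<omega>"
    and c4: "\<gamma> n \<omega> \<le> \<gamma> 1 \<omega>" and c5: "\<gamma> 1 \<omega> \<le> j" unfolding cond_def by auto
  have g: "\<gamma> n \<omega> \<le> \<bar>j\<bar>" using c4 c5 by linarith
  have sn: "s n \<omega> \<le> t + \<bar>j\<bar>"
  proof (cases "n \<ge> 1")
    case True then show ?thesis using s_step[OF True, of \<omega>] c1 g by linarith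
  next
    case False then have "n = 0" by simp
    then show ?thesis using c1 by simp
  qed
  have wb: "w n \<omega> \<le> exp (2*c*(t + \<bar>j\<bar>))" unfolding w_def using sn c_pos by simp
  have eb: "norm (ee (n-1) \<omega>) \<le> \<bar>j\<bar> + norm \<theta>0" by (rule ee_bound[OF c2])
  have "2 * \<gamma> n \<omega> * w n \<omega> * norm (ee (n-1) \<omega>) \<le> 2 * \<bar>j\<bar> * exp (2*c*(t + \<bar>j\<bar>)) * (\<bar>j\<bar> + norm \<theta>0)"
    using g wb eb c3 w_pos[of n \<omega>] by (intro mult_mono) auto
  then show ?thesis using True by (simp add: h_norm Cb_def)
qed

definition Q :: "real \<Rightarrow> real \<Rightarrow> 'a \<Rightarrow> real" where
  "Q j t \<omega> = (if \<gamma> 1 \<omega> \<le> j then exp (-(4*c)*t) * (\<Sum>n\<in>{1..hit_index \<gamma> t \<omega>}. (\<gamma> n \<omega>)\<^sup>2 * exp ((4*c) * s n \<omega>)) else 0)"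

lemma sum_meas_aux:
  assumes "\<And>n. n \<ge> 1 \<Longrightarrow> f n \<in> borel_measurable M"
  shows "(\<lambda>\<omega>. \<Sum>n\<in>{1..k}. f n \<omega> :: real) \<in> borel_measurable M"
  using assms by (intro borel_measurable_sum) auto

lemma Q_meas[measurable]: "Q j t \<in> borel_measurable M"
proof -
  have f: "(\<lambda>\<omega>. \<Sum>n\<in>{1..k}. (\<gamma> n \<omega>)\<^sup>2 * exp ((4*c) * s n \<omega>)) \<in> borel_measurable M" for k
    by (rule sum_meas_aux) measurable
  have "(\<lambda>\<omega>. (\<lambda>k \<omega>. \<Sum>n\<in>{1..k}. (\<gamma> n \<omega>)\<^sup>2 * exp ((4*c) * s n \<omega>)) (hit_index \<gamma> t \<omega>) \<omega>) \<in> borel_measurable M"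
    by (rule measurable_compose_countable[OF f hit_meas])
  then show ?thesis unfolding Q_def by measurable
qed

lemma V_meas[measurable]: "V j t \<in> borel_measurable M"
proof -
  have f: "(\<lambda>\<omega>. \<Sum>n\<in>{1..k}. (\<gamma> n \<omega>)\<^sup>2 * w n \<omega>) \<in> borel_measurable M" for k
    by (rule sum_meas_aux) (unfold w_def, measurable)
  have "(\<lambda>\<omega>. (\<lambda>k \<omega>. \<Sum>n\<in>{1..k}. (\<gamma> n \<omega>)\<^sup>2 * w n \<omega>) (hit_index \<gamma> t \<omega>) \<omega>) \<in> borel_measurable M"
    by (rule measurable_compose_countable[OF f hit_meas])
  then show ?thesis unfolding V_def ee_def by measurable
qed

lemma h_measM[measurable]: "n \<ge> 1 \<Longrightarrow> h j t n \<in> borel_measurable M"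
  using F_to_M[OF h_meas] by blast

lemma Z_meas[measurable]: "Z j t n0 \<in> borel_measurable M"
proof -
  have "(\<lambda>\<omega>. \<Sum>n\<in>{1..n0}. inner (h j t n \<omega>) (D n \<omega>)) \<in> borel_measurable M"
    by (rule sum_meas_aux) measurable
  then show ?thesis unfolding Z_def by measurable
qed

end

lemma sum_le_sub:
  fixes f g :: "nat \<Rightarrow> real"
  assumes "finite A" "finite B" "\<And>n. n \<in> A \<Longrightarrow> n \<notin> B \<Longrightarrow> f n = 0"
    "\<And>n. n \<in> A \<Longrightarrow> n \<in> B \<Longrightarrow> f n \<le> g n" "\<And>n. n \<in> B \<Longrightarrow> 0 \<le> g n"
  shows "(\<Sum>n\<in>A. f n) \<le> (\<Sum>n\<in>B. g n)"
proof -
  have "(\<Sum>n\<in>A. f n) = (\<Sum>n\<in>A \<inter> B. f n) + (\<Sum>n\<in>A - B. f n)"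
    using assms(1) by (metis Int_Diff_Un Int_Diff_disjoint finite_Int finite_Diff sum.union_disjoint)
  also have "(\<Sum>n\<in>A - B. f n) = 0" using assms(3) by (intro sum.neutral) auto
  also have "(\<Sum>n\<in>A \<inter> B. f n) \<le> (\<Sum>n\<in>A \<inter> B. g n)" using assms(4) by (intro sum_mono) auto
  also have "\<dots> \<le> (\<Sum>n\<in>B. g n)" using assms(2,5) by (intro sum_mono2) auto
  finally show ?thesis by simp
qed

context sa begin

interpretation prob_space M by (rule ps)

definition KQ :: "real \<Rightarrow> real" where "KQ j = \<bar>j\<bar> * exp (8*c*\<bar>j\<bar>) / (4*c)"

lemma Q_bound:
  assumes G: "good \<omega>" and t: "0 < t"
  shows "0 \<le> Q j t \<omega>" "Q j t \<omega> \<le> KQ j"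
proof -
  show "0 \<le> Q j t \<omega>" unfolding Q_def by (auto intro!: sum_nonneg mult_nonneg_nonneg)
  show "Q j t \<omega> \<le> KQ j"
  proof (cases "\<gamma> 1 \<omega> \<le> j")
    case False then show ?thesis using c_pos by (simp add: Q_def KQ_def)
  next
    case True
    have a: "0 < 4*c" using c_pos by simp
    have "exp (-(4*c)*t) * (\<Sum>n\<in>{1..hit_index \<gamma> t \<omega>}. (\<gamma> n \<omega>)\<^sup>2 * exp ((4*c) * sum (\<lambda>k. \<gamma> k \<omega>) {1..n}))
        \<le> \<gamma> 1 \<omega> * exp (2*(4*c)*\<gamma> 1 \<omega>) / (4*c)"
      using hit_pos[OF G t] hit_prev[OF G t] unfolding s_def
      by (intro det_bound[of "4*c" "\<lambda>k. \<gamma> k \<omega>", OF a good_nn[OF G] good_mono[OF G]]) auto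
    also have "\<dots> \<le> KQ j"
    proof -
      have g0: "0 \<le> \<gamma> 1 \<omega>" using good_nn[OF G, of 1] by simp
      have "\<gamma> 1 \<omega> * exp (2*(4*c)*\<gamma> 1 \<omega>) \<le> \<bar>j\<bar> * exp (8*c*\<bar>j\<bar>)"
        using True g0 c_pos by (intro mult_mono) auto
      then show ?thesis unfolding KQ_def using c_pos by (simp add: divide_right_mono)
    qed
    finally show ?thesis using True unfolding Q_def s_def by simp
  qed
qed

lemma SQ_int: "0 < t \<Longrightarrow> integrable M (\<lambda>\<omega>. S \<omega> * Q j t \<omega>)"
proof -
  assume t: "0 < t"
  have i1: "integrable M (\<lambda>\<omega>. KQ j * S \<omega>)" using S_int by simp
  have "AE \<omega> in M. norm (S \<omega> * Q j t \<omega>) \<le> norm (KQ j * S \<omega>)"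
    using AE_good
  proof eventually_elim
    case (elim \<omega>)
    have "S \<omega> * Q j t \<omega> \<le> S \<omega> * KQ j" using Q_bound[OF elim t] S_nonneg by (intro mult_left_mono) auto
    then show ?case using Q_bound[OF elim t, of j] S_nonneg[of \<omega>] by (simp add: abs_mult mult_ac)
  qed
  moreover have "(\<lambda>\<omega>. S \<omega> * Q j t \<omega>) \<in> borel_measurable M" by measurable
  ultimately show ?thesis using Bochner_Integration.integrable_bound[OF i1] by blast
qed

lemma hsq_path:
  assumes G: "good \<omega>"
  shows "exp (-(4*c)*t) * (\<Sum>n\<in>{1..n0}. (norm (h j t n \<omega>))\<^sup>2) \<le> 4 * (\<bar>j\<bar> + norm \<theta>0)\<^sup>2 * Q j t \<omega>"
proof (cases "\<gamma> 1 \<omega> \<le> j")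
  case False
  then have "\<not> cond j t n \<omega>" for n unfolding cond_def by auto
  then have "h j t n \<omega> = 0" for n unfolding h_def by simp
  then show ?thesis using False by (simp add: Q_def)
next
  case True
  define J where "J = \<bar>j\<bar> + norm \<theta>0"
  define N where "N = hit_index \<gamma> t \<omega>"
  have "(\<Sum>n\<in>{1..n0}. (norm (h j t n \<omega>))\<^sup>2) \<le> (\<Sum>n\<in>{1..N}. 4 * J\<^sup>2 * ((\<gamma> n \<omega>)\<^sup>2 * exp ((4*c) * s n \<omega>)))"
  proof (rule sum_le_sub)
    fix n assume n: "n \<in> {1..n0}" "n \<notin> {1..N}"
    show "(norm (h j t n \<omega>))\<^sup>2 = 0"
    proof (cases "cond j t n \<omega>")
      case True
      then have "s (n-1) \<omega> < t" unfolding cond_def by simp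
      then have "n - 1 < N" unfolding N_def by (rule s_lt_hit[OF G])
      then show ?thesis using n by auto
    qed (simp add: h_norm)
  next
    fix n assume n: "n \<in> {1..n0}" "n \<in> {1..N}"
    show "(norm (h j t n \<omega>))\<^sup>2 \<le> 4 * J\<^sup>2 * ((\<gamma> n \<omega>)\<^sup>2 * exp ((4*c) * s n \<omega>))"
    proof (cases "cond j t n \<omega>")
      case True
      then have c2: "norm (\<Theta> (n-1) \<omega>) \<le> j" and c3: "0 \<le> \<gamma> n \<omega>" unfolding cond_def by auto
      have eb: "norm (ee (n-1) \<omega>) \<le> J" unfolding J_def by (rule ee_bound[OF c2])
      have "(norm (h j t n \<omega>))\<^sup>2 = 4 * (\<gamma> n \<omega>)\<^sup>2 * (w n \<omega>)\<^sup>2 * (norm (ee (n-1) \<omega>))\<^sup>2"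
        using True by (simp add: h_norm power_mult_distrib)
      also have "(w n \<omega>)\<^sup>2 = exp ((4*c) * s n \<omega>)"
        unfolding w_def by (simp add: power2_eq_square exp_add[symmetric])
      also have "4 * (\<gamma> n \<omega>)\<^sup>2 * exp ((4*c) * s n \<omega>) * (norm (ee (n-1) \<omega>))\<^sup>2
          \<le> 4 * (\<gamma> n \<omega>)\<^sup>2 * exp ((4*c) * s n \<omega>) * J\<^sup>2"
        using eb by (intro mult_left_mono power_mono) auto
      finally show ?thesis by (simp add: mult_ac)
    qed (simp add: h_norm)
  qed auto
  then have "exp (-(4*c)*t) * (\<Sum>n\<in>{1..n0}. (norm (h j t n \<omega>))\<^sup>2)
      \<le> exp (-(4*c)*t) * (\<Sum>n\<in>{1..N}. 4 * J\<^sup>2 * ((\<gamma> n \<omega>)\<^sup>2 * exp ((4*c) * s n \<omega>)))"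
    by (intro mult_left_mono) auto
  also have "\<dots> = 4 * J\<^sup>2 * Q j t \<omega>"
    using True unfolding Q_def N_def by (simp add: sum_distrib_left mult_ac)
  finally show ?thesis unfolding J_def .
qed

end

context sa begin

interpretation prob_space M by (rule ps)

lemma inner_sq_int: "n \<ge> 1 \<Longrightarrow> integrable M (\<lambda>\<omega>. (inner (h j t n \<omega>) (D n \<omega>))\<^sup>2)"
      "n \<ge> 1 \<Longrightarrow> integrable M (\<lambda>\<omega>. S \<omega> * (norm (h j t n \<omega>))\<^sup>2)"
      "n \<ge> 1 \<Longrightarrow> AE \<omega> in M. (inner (h j t n \<omega>) (D n \<omega>))\<^sup>2 \<le> S \<omega> * (norm (h j t n \<omega>))\<^sup>2"
proof -
  assume n: "n \<ge> 1"
  have i1: "integrable M (\<lambda>\<omega>. (Cb j t)\<^sup>2 * S \<omega>)" using S_int by simp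
  have hb2: "(norm (h j t n \<omega>))\<^sup>2 \<le> (Cb j t)\<^sup>2" for \<omega> using h_bound by (intro power_mono) auto
  show ae: "AE \<omega> in M. (inner (h j t n \<omega>) (D n \<omega>))\<^sup>2 \<le> S \<omega> * (norm (h j t n \<omega>))\<^sup>2"
    using AE_good
  proof eventually_elim
    case (elim \<omega>)
    have sup2: "Sup2 \<omega> \<noteq> \<infinity>" using elim unfolding good_def by blast
    have "(inner (h j t n \<omega>) (D n \<omega>))\<^sup>2 = \<bar>inner (h j t n \<omega>) (D n \<omega>)\<bar>\<^sup>2" by simp
    also have "\<dots> \<le> (norm (h j t n \<omega>) * norm (D n \<omega>))\<^sup>2"
      by (intro power_mono Cauchy_Schwarz_ineq2) auto
    also have "\<dots> = (norm (h j t n \<omega>))\<^sup>2 * (norm (D n \<omega>))\<^sup>2" by (simp add: power_mult_distrib)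
    also have "\<dots> \<le> (norm (h j t n \<omega>))\<^sup>2 * S \<omega>" using D_le_S[OF sup2 n] by (intro mult_left_mono) auto
    finally show ?case by (simp add: mult_ac)
  qed
  have "AE \<omega> in M. norm (S \<omega> * (norm (h j t n \<omega>))\<^sup>2) \<le> norm ((Cb j t)\<^sup>2 * S \<omega>)"
  proof (intro AE_I2)
    fix \<omega>
    have "S \<omega> * (norm (h j t n \<omega>))\<^sup>2 \<le> S \<omega> * (Cb j t)\<^sup>2" using hb2 S_nonneg by (intro mult_left_mono) auto
    then show "norm (S \<omega> * (norm (h j t n \<omega>))\<^sup>2) \<le> norm ((Cb j t)\<^sup>2 * S \<omega>)"
      using S_nonneg[of \<omega>] by (simp add: abs_mult mult_ac)
  qed
  moreover have "(\<lambda>\<omega>. S \<omega> * (norm (h j t n \<omega>))\<^sup>2) \<in> borel_measurable M" using n by measurable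
  ultimately show i2: "integrable M (\<lambda>\<omega>. S \<omega> * (norm (h j t n \<omega>))\<^sup>2)"
    using Bochner_Integration.integrable_bound[OF i1] by blast
  have "AE \<omega> in M. norm ((inner (h j t n \<omega>) (D n \<omega>))\<^sup>2) \<le> norm (S \<omega> * (norm (h j t n \<omega>))\<^sup>2)"
    using ae by eventually_elim (simp add: S_nonneg)
  moreover have "(\<lambda>\<omega>. (inner (h j t n \<omega>) (D n \<omega>))\<^sup>2) \<in> borel_measurable M" using n by measurable
  ultimately show "integrable M (\<lambda>\<omega>. (inner (h j t n \<omega>) (D n \<omega>))\<^sup>2)"
    using Bochner_Integration.integrable_bound[OF i2] by blast
qed

lemma Zsq:
  assumes t: "0 < t"
  shows "integrable M (\<lambda>\<omega>. (Z j t n0 \<omega>)\<^sup>2)"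
    "(\<integral>\<omega>. (Z j t n0 \<omega>)\<^sup>2 \<partial>M) \<le> 4 * (\<bar>j\<bar> + norm \<theta>0)\<^sup>2 * (\<integral>\<omega>. S \<omega> * Q j t \<omega> \<partial>M)"
proof -
  define E4 where "E4 = exp (-(4*c)*t)"
  have L: "integrable M (\<lambda>\<omega>. (\<Sum>n\<in>{1..n0}. inner (h j t n \<omega>) (D n \<omega>))\<^sup>2) \<and>
    (\<integral>\<omega>. (\<Sum>n\<in>{1..n0}. inner (h j t n \<omega>) (D n \<omega>))\<^sup>2 \<partial>M) = (\<Sum>n\<in>{1..n0}. \<integral>\<omega>. (inner (h j t n \<omega>) (D n \<omega>))\<^sup>2 \<partial>M)"
    by (rule L2[OF h_meas h_bound])
  have Zeq: "(Z j t n0 \<omega>)\<^sup>2 = E4 * (\<Sum>n\<in>{1..n0}. inner (h j t n \<omega>) (D n \<omega>))\<^sup>2" for \<omega>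
    unfolding Z_def E4_def by (simp add: power_mult_distrib power2_eq_square exp_add[symmetric])
  show "integrable M (\<lambda>\<omega>. (Z j t n0 \<omega>)\<^sup>2)" unfolding Zeq using L by simp
  have "(\<integral>\<omega>. (Z j t n0 \<omega>)\<^sup>2 \<partial>M) = E4 * (\<Sum>n\<in>{1..n0}. \<integral>\<omega>. (inner (h j t n \<omega>) (D n \<omega>))\<^sup>2 \<partial>M)"
    unfolding Zeq using L by simp
  also have "\<dots> \<le> E4 * (\<Sum>n\<in>{1..n0}. \<integral>\<omega>. S \<omega> * (norm (h j t n \<omega>))\<^sup>2 \<partial>M)"
    unfolding E4_def using inner_sq_int
    by (intro mult_left_mono sum_mono integral_mono_AE) auto
  also have "(\<Sum>n\<in>{1..n0}. \<integral>\<omega>. S \<omega> * (norm (h j t n \<omega>))\<^sup>2 \<partial>M) = (\<integral>\<omega>. (\<Sum>n\<in>{1..n0}. S \<omega> * (norm (h j t n \<omega>))\<^sup>2) \<partial>M)"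
    using inner_sq_int(2) by (intro Bochner_Integration.integral_sum[symmetric]) auto
  also have "E4 * \<dots> = (\<integral>\<omega>. E4 * (\<Sum>n\<in>{1..n0}. S \<omega> * (norm (h j t n \<omega>))\<^sup>2) \<partial>M)"
    by (rule integral_mult_right_zero[symmetric])
  also have "\<dots> = (\<integral>\<omega>. S \<omega> * (E4 * (\<Sum>n\<in>{1..n0}. (norm (h j t n \<omega>))\<^sup>2)) \<partial>M)"
    by (intro Bochner_Integration.integral_cong) (simp_all add: sum_distrib_left mult_ac)
  also have "\<dots> \<le> (\<integral>\<omega>. 4 * (\<bar>j\<bar> + norm \<theta>0)\<^sup>2 * (S \<omega> * Q j t \<omega>) \<partial>M)"
  proof (rule integral_mono_AE')
    show "integrable M (\<lambda>\<omega>. 4 * (\<bar>j\<bar> + norm \<theta>0)\<^sup>2 * (S \<omega> * Q j t \<omega>))" using SQ_int[OF t] by simp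
    show "AE \<omega> in M. S \<omega> * (E4 * (\<Sum>n\<in>{1..n0}. (norm (h j t n \<omega>))\<^sup>2)) \<le> 4 * (\<bar>j\<bar> + norm \<theta>0)\<^sup>2 * (S \<omega> * Q j t \<omega>)"
      using AE_good
    proof eventually_elim
      case (elim \<omega>)
      have "S \<omega> * (E4 * (\<Sum>n\<in>{1..n0}. (norm (h j t n \<omega>))\<^sup>2)) \<le> S \<omega> * (4 * (\<bar>j\<bar> + norm \<theta>0)\<^sup>2 * Q j t \<omega>)"
        unfolding E4_def using hsq_path[OF elim] S_nonneg by (intro mult_left_mono) auto
      then show ?case by (simp add: mult_ac)
    qed
    show "AE \<omega> in M. 0 \<le> 4 * (\<bar>j\<bar> + norm \<theta>0)\<^sup>2 * (S \<omega> * Q j t \<omega>)"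
      using AE_good by eventually_elim (use Q_bound[OF _ t] S_nonneg in auto)
  qed
  also have "\<dots> = 4 * (\<bar>j\<bar> + norm \<theta>0)\<^sup>2 * (\<integral>\<omega>. S \<omega> * Q j t \<omega> \<partial>M)" by simp
  finally show "(\<integral>\<omega>. (Z j t n0 \<omega>)\<^sup>2 \<partial>M) \<le> 4 * (\<bar>j\<bar> + norm \<theta>0)\<^sup>2 * (\<integral>\<omega>. S \<omega> * Q j t \<omega> \<partial>M)" .
qed

end

context sa begin

interpretation prob_space M by (rule ps)

definition Eset :: "'a set" where "Eset = {\<omega>\<in>space M. bdd_above ((\<lambda>n. norm (\<Theta> n \<omega>)) ` {1..})}"
definition Ej :: "real \<Rightarrow> 'a set" where "Ej j = {\<omega>\<in>space M. inE j \<omega>}"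

lemma bdd_nat: "bdd_above (f ` {1..}) \<longleftrightarrow> (\<exists>B::nat. \<forall>n. 1 \<le> n \<longrightarrow> f n \<le> real B)"
  for f :: "nat \<Rightarrow> real"
proof
  assume "bdd_above (f ` {1..})"
  then obtain B where B: "\<And>n. 1 \<le> n \<Longrightarrow> f n \<le> B" unfolding bdd_above_def by auto
  show "\<exists>B::nat. \<forall>n. 1 \<le> n \<longrightarrow> f n \<le> real B"
    using B real_nat_ceiling_ge[of B] by (intro exI[of _ "nat \<lceil>B\<rceil>"]) (auto intro: order_trans)
next
  assume "\<exists>B::nat. \<forall>n. 1 \<le> n \<longrightarrow> f n \<le> real B"
  then show "bdd_above (f ` {1..})" unfolding bdd_above_def by auto
qed

lemma Eset_meas[measurable]: "Eset \<in> sets M"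
proof -
  have "Eset = {\<omega>\<in>space M. \<exists>B::nat. \<forall>n. 1 \<le> n \<longrightarrow> norm (\<Theta> n \<omega>) \<le> real B}"
    unfolding Eset_def bdd_nat by simp
  also have "\<dots> \<in> sets M" by measurable
  finally show ?thesis .
qed

lemma Ej_meas[measurable]: "Ej j \<in> sets M"
  unfolding Ej_def inE_def by measurable

lemma lim1: "(\<lambda>j::nat. \<integral>\<omega>. (indicator (Eset - Ej (real j)) \<omega> :: real) \<partial>M) \<longlonglongrightarrow> 0"
proof -
  have "(\<lambda>j::nat. \<integral>\<omega>. (indicator (Eset - Ej (real j)) \<omega> :: real) \<partial>M) \<longlonglongrightarrow> (\<integral>\<omega>. 0 \<partial>M)"
  proof (rule integral_dominated_convergence[where w="\<lambda>_. 1"])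
    show "AE \<omega> in M. (\<lambda>j::nat. indicator (Eset - Ej (real j)) \<omega> :: real) \<longlonglongrightarrow> 0"
    proof (intro AE_I2)
      fix \<omega> assume sp: "\<omega> \<in> space M"
      show "(\<lambda>j::nat. indicator (Eset - Ej (real j)) \<omega> :: real) \<longlonglongrightarrow> 0"
      proof (cases "\<omega> \<in> Eset")
        case False then show ?thesis by simp
      next
        case True
        then obtain B :: nat where B: "\<And>n. 1 \<le> n \<Longrightarrow> norm (\<Theta> n \<omega>) \<le> real B"
          unfolding Eset_def bdd_nat by auto
        define K where "K = max (real B) (max (norm (\<Theta> 0 \<omega>)) (\<gamma> 1 \<omega>))"
        obtain j0 :: nat where j0: "K \<le> real j0" using real_arch_simple by blast
        have "\<forall>\<^sub>F j in sequentially. (indicator (Eset - Ej (real j)) \<omega> :: real) = 0"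
          unfolding eventually_sequentially
        proof (intro exI allI impI)
          fix j assume "j0 \<le> j"
          then have Kj: "K \<le> real j" using j0 by (meson of_nat_le_iff order_trans)
          have "norm (\<Theta> k \<omega>) \<le> real j" for k
          proof (cases "k = 0")
            case True then show ?thesis using Kj unfolding K_def by simp
          next
            case False then show ?thesis using B[of k] Kj unfolding K_def by simp
          qed
          moreover have "\<gamma> 1 \<omega> \<le> real j" using Kj unfolding K_def by simp
          ultimately have "\<omega> \<in> Ej (real j)" unfolding Ej_def inE_def using sp by simp
          then show "(indicator (Eset - Ej (real j)) \<omega> :: real) = 0" by simp
        qed
        then show ?thesis by (rule tendsto_eventually)
      qed
    qed
  qed (auto split: split_indicator)
  then show ?thesis by simp
qed

lemma V_lim:
  assumes G: "good \<omega>"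
  shows "((\<lambda>t. V j t \<omega>) \<longlongrightarrow> 0) at_top"
proof -
  have a: "0 < 2*c" using c_pos by simp
  have d: "((\<lambda>t. exp (-(2*c)*t) * (\<Sum>n\<in>{1..hit_index \<gamma> t \<omega>}. (\<gamma> n \<omega>)\<^sup>2 * exp ((2*c) * sum (\<lambda>k. \<gamma> k \<omega>) {1..n}))) \<longlongrightarrow> 0) at_top"
    using hit_pos[OF G] hit_prev[OF G] unfolding s_def
    by (intro det_lim[OF a good_nn[OF G] good_mono[OF G] good_lim[OF G]]) auto
  have e: "((\<lambda>t::real. exp (-(2*c)*t)) \<longlongrightarrow> 0) at_top"
  proof -
    have "filterlim (\<lambda>t::real. -(2*c) * t) at_bot at_top"
      using a by (intro filterlim_tendsto_neg_mult_at_bot[OF tendsto_const] filterlim_ident) auto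
    then show ?thesis by (rule filterlim_compose[OF exp_at_bot])
  qed
  have "((\<lambda>t. exp (-(2*c)*t) * (norm (ee 0 \<omega>))\<^sup>2 + 2*((gb j)\<^sup>2 + S \<omega>) *
      (exp (-(2*c)*t) * (\<Sum>n\<in>{1..hit_index \<gamma> t \<omega>}. (\<gamma> n \<omega>)\<^sup>2 * exp ((2*c) * sum (\<lambda>k. \<gamma> k \<omega>) {1..n})))) \<longlongrightarrow> 0 * (norm (ee 0 \<omega>))\<^sup>2 + 2*((gb j)\<^sup>2 + S \<omega>) * 0) at_top"
    by (intro tendsto_intros e d)
  moreover have "V j t \<omega> = exp (-(2*c)*t) * (norm (ee 0 \<omega>))\<^sup>2 + 2*((gb j)\<^sup>2 + S \<omega>) *
      (exp (-(2*c)*t) * (\<Sum>n\<in>{1..hit_index \<gamma> t \<omega>}. (\<gamma> n \<omega>)\<^sup>2 * exp ((2*c) * sum (\<lambda>k. \<gamma> k \<omega>) {1..n})))" for t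
    unfolding V_def w_def s_def by (simp add: algebra_simps)
  ultimately show ?thesis by simp
qed

lemma Q_lim:
  assumes G: "good \<omega>"
  shows "((\<lambda>t. Q j t \<omega>) \<longlongrightarrow> 0) at_top"
proof (cases "\<gamma> 1 \<omega> \<le> j")
  case True
  have a: "0 < 4*c" using c_pos by simp
  have d: "((\<lambda>t. exp (-(4*c)*t) * (\<Sum>n\<in>{1..hit_index \<gamma> t \<omega>}. (\<gamma> n \<omega>)\<^sup>2 * exp ((4*c) * sum (\<lambda>k. \<gamma> k \<omega>) {1..n}))) \<longlongrightarrow> 0) at_top"
    using hit_pos[OF G] hit_prev[OF G] unfolding s_def
    by (intro det_lim[OF a good_nn[OF G] good_mono[OF G] good_lim[OF G]]) auto
  then show ?thesis using True unfolding Q_def s_def by simp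
next
  case False then show ?thesis unfolding Q_def by simp
qed

lemma lim2:
  assumes "0 < \<delta>"
  shows "((\<lambda>t. \<integral>\<omega>. (indicator {\<omega>\<in>space M. inE j \<omega> \<and> \<delta> \<le> V j t \<omega>} \<omega> :: real) \<partial>M) \<longlongrightarrow> 0) at_top"
proof -
  have "((\<lambda>t. \<integral>\<omega>. (indicator {\<omega>\<in>space M. inE j \<omega> \<and> \<delta> \<le> V j t \<omega>} \<omega> :: real) \<partial>M) \<longlongrightarrow> (\<integral>\<omega>. 0 \<partial>M)) at_top"
  proof (rule integral_dominated_convergence_at_top[where w="\<lambda>_. 1"])
    show "AE \<omega> in M. ((\<lambda>t. indicator {\<omega>\<in>space M. inE j \<omega> \<and> \<delta> \<le> V j t \<omega>} \<omega> :: real) \<longlongrightarrow> 0) at_top"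
      using AE_good
    proof eventually_elim
      case (elim \<omega>)
      have "\<forall>\<^sub>F t in at_top. V j t \<omega> < \<delta>" using V_lim[OF elim] assms by (intro order_tendstoD) auto
      then have "\<forall>\<^sub>F t in at_top. (indicator {\<omega>\<in>space M. inE j \<omega> \<and> \<delta> \<le> V j t \<omega>} \<omega> :: real) = 0"
        by eventually_elim (auto split: split_indicator)
      then show ?case by (rule tendsto_eventually)
    qed
    show "\<forall>\<^sub>F t in at_top. AE \<omega> in M. norm (indicator {\<omega>\<in>space M. inE j \<omega> \<and> \<delta> \<le> V j t \<omega>} \<omega> :: real) \<le> 1"
      by (auto split: split_indicator)
    show "\<And>t. (indicator {\<omega>\<in>space M. inE j \<omega> \<and> \<delta> \<le> V j t \<omega>} :: 'a \<Rightarrow> real) \<in> borel_measurable M"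
      unfolding inE_def by measurable
  qed auto
  then show ?thesis by simp
qed

lemma lim3: "((\<lambda>t. \<integral>\<omega>. S \<omega> * Q j t \<omega> \<partial>M) \<longlongrightarrow> 0) at_top"
proof -
  have "((\<lambda>t. \<integral>\<omega>. S \<omega> * Q j t \<omega> \<partial>M) \<longlongrightarrow> (\<integral>\<omega>. 0 \<partial>M)) at_top"
  proof (rule integral_dominated_convergence_at_top[where w="\<lambda>\<omega>. KQ j * S \<omega>"])
    show "AE \<omega> in M. ((\<lambda>t. S \<omega> * Q j t \<omega>) \<longlongrightarrow> 0) at_top"
      using AE_good
    proof eventually_elim
      case (elim \<omega>)
      show ?case using tendsto_mult[OF tendsto_const Q_lim[OF elim]] by simp
    qed
    show "\<forall>\<^sub>F t in at_top. AE \<omega> in M. norm (S \<omega> * Q j t \<omega>) \<le> KQ j * S \<omega>"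
      using eventually_gt_at_top[of 0]
    proof eventually_elim
      case (elim t)
      note tpos = elim
      show ?case using AE_good
      proof eventually_elim
        case (elim \<omega>)
        have "S \<omega> * Q j t \<omega> \<le> S \<omega> * KQ j" using Q_bound[OF elim tpos] S_nonneg by (intro mult_left_mono) auto
        then show ?case using Q_bound[OF elim tpos, of j] S_nonneg[of \<omega>] by (simp add: abs_mult mult_ac)
      qed
    qed
    show "integrable M (\<lambda>\<omega>. KQ j * S \<omega>)" using S_int by simp
  qed auto
  then show ?thesis by simp
qed

lemma lim4: "(\<lambda>n0. \<integral>\<omega>. (indicator {\<omega>\<in>space M. s n0 \<omega> < t} \<omega> :: real) \<partial>M) \<longlonglongrightarrow> 0"
proof -
  have "(\<lambda>n0. \<integral>\<omega>. (indicator {\<omega>\<in>space M. s n0 \<omega> < t} \<omega> :: real) \<partial>M) \<longlonglongrightarrow> (\<integral>\<omega>. 0 \<partial>M)"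
  proof (rule integral_dominated_convergence[where w="\<lambda>_. 1"])
    show "AE \<omega> in M. (\<lambda>n0. indicator {\<omega>\<in>space M. s n0 \<omega> < t} \<omega> :: real) \<longlonglongrightarrow> 0"
      using AE_good
    proof eventually_elim
      case (elim \<omega>)
      obtain m where m: "t \<le> s m \<omega>" using good_unb[OF elim] by blast
      have "\<forall>\<^sub>F n0 in sequentially. (indicator {\<omega>\<in>space M. s n0 \<omega> < t} \<omega> :: real) = 0"
        unfolding eventually_sequentially
      proof (intro exI allI impI)
        fix n0 assume "m \<le> n0"
        then have "t \<le> s n0 \<omega>" using m s_mono[OF elim] order_trans by blast
        then show "(indicator {\<omega>\<in>space M. s n0 \<omega> < t} \<omega> :: real) = 0" by (simp split: split_indicator)
      qed
      then show ?case by (rule tendsto_eventually)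
    qed
  qed (auto split: split_indicator)
  then show ?thesis by simp
qed

end

context sa begin

interpretation prob_space M by (rule ps)

definition E0 :: "'a set" where "E0 = {\<omega>. bdd_above ((\<lambda>n. norm (\<Theta> n \<omega>)) ` {1..})}"

definition fI :: "real \<Rightarrow> 'a \<Rightarrow> real" where
  "fI t \<omega> = min 1 (norm (\<Theta> (hit_index \<gamma> t \<omega>) \<omega> - \<theta>0) * indicator E0 \<omega>)"

lemma ptwise:
  assumes e: "0 < \<epsilon>" and t: "0 < t" and G: "good \<omega>" and sp: "\<omega> \<in> space M"
  shows "fI t \<omega> \<le> \<epsilon> + indicator (Eset - Ej j) \<omega> + indicator {\<omega>\<in>space M. inE j \<omega> \<and> \<epsilon>\<^sup>2/2 \<le> V j t \<omega>} \<omega>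
     + indicator {\<omega>\<in>space M. s n0 \<omega> < t} \<omega> + (Z j t n0 \<omega>)\<^sup>2 / (\<epsilon>\<^sup>2/2)\<^sup>2"
proof -
  define \<delta> where "\<delta> = \<epsilon>\<^sup>2/2"
  have d0: "0 < \<delta>" unfolding \<delta>_def using e by simp
  define N where "N = hit_index \<gamma> t \<omega>"
  define en where "en = norm (ee N \<omega>)"
  define i1 where "i1 = (indicator (Eset - Ej j) \<omega> :: real)"
  define i2 where "i2 = (indicator {\<omega>\<in>space M. inE j \<omega> \<and> \<delta> \<le> V j t \<omega>} \<omega> :: real)"
  define i3 where "i3 = (indicator {\<omega>\<in>space M. s n0 \<omega> < t} \<omega> :: real)"
  define z where "z = (Z j t n0 \<omega>)\<^sup>2 / \<delta>\<^sup>2"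
  have nn: "0 \<le> i1" "0 \<le> i2" "0 \<le> i3" "0 \<le> z" unfolding i1_def i2_def i3_def z_def by auto
  have f1: "fI t \<omega> \<le> 1" unfolding fI_def by simp
  have goal: "fI t \<omega> \<le> \<epsilon> + i1 + i2 + i3 + z"
  proof (cases "\<omega> \<in> E0")
    case False
    then have "fI t \<omega> = 0" unfolding fI_def by simp
    then show ?thesis using nn e by linarith
  next
    case inE0: True
    have fen: "fI t \<omega> \<le> en" unfolding fI_def en_def N_def ee_def using inE0 by simp
    show ?thesis
    proof (cases "inE j \<omega>")
      case False
      then have "\<omega> \<in> Eset - Ej j" using inE0 sp unfolding Eset_def Ej_def E0_def by auto
      then have "i1 = 1" unfolding i1_def by simp
      then show ?thesis using nn f1 e by linarith
    next
      case inEj: True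
      show ?thesis
      proof (cases "s n0 \<omega> < t")
        case True
        then have "i3 = 1" unfolding i3_def using sp by simp
        then show ?thesis using nn f1 e by linarith
      next
        case sn0: False
        show ?thesis
        proof (cases "\<delta> \<le> V j t \<omega>")
          case True
          then have "i2 = 1" unfolding i2_def using sp inEj by simp
          then show ?thesis using nn f1 e by linarith
        next
          case Vd: False
          have "N \<le> n0" unfolding N_def using sn0 by (intro hit_le) simp
          then have pm: "en\<^sup>2 \<le> V j t \<omega> + Z j t n0 \<omega>" unfolding en_def N_def
            by (rule path_main[OF G inEj t])
          show ?thesis
          proof (cases "en \<le> \<epsilon>")
            case True then show ?thesis using fen nn by linarith
          next
            case False
            then have "\<epsilon>\<^sup>2 < en\<^sup>2" using e by (intro power_strict_mono) auto
            then have "2*\<delta> < en\<^sup>2" unfolding \<delta>_def by simp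
            then have Zd: "\<delta> < Z j t n0 \<omega>" using pm Vd by linarith
            then have "1 < Z j t n0 \<omega> / \<delta>" using d0 by simp
            then have "1 < (Z j t n0 \<omega> / \<delta>)\<^sup>2" by (smt (verit) one_less_power zero_less_numeral)
            then have "1 < z" unfolding z_def by (simp add: power_divide)
            then show ?thesis using f1 nn e by linarith
          qed
        qed
      qed
    qed
  qed
  then show ?thesis unfolding i1_def i2_def i3_def z_def \<delta>_def .
qed

end

context sa begin

interpretation prob_space M by (rule ps)

lemma bound_t:
  assumes e: "0 < \<epsilon>" and t: "0 < t"
  shows "(\<integral>\<omega>. fI t \<omega> \<partial>M) \<le> \<epsilon> + (\<integral>\<omega>. (indicator (Eset - Ej j) \<omega> :: real) \<partial>M)
     + (\<integral>\<omega>. (indicator {\<omega>\<in>space M. inE j \<omega> \<and> \<epsilon>\<^sup>2/2 \<le> V j t \<omega>} \<omega> :: real) \<partial>M)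
     + (\<integral>\<omega>. (indicator {\<omega>\<in>space M. s n0 \<omega> < t} \<omega> :: real) \<partial>M)
     + 4 * (\<bar>j\<bar> + norm \<theta>0)\<^sup>2 * (\<integral>\<omega>. S \<omega> * Q j t \<omega> \<partial>M) / (\<epsilon>\<^sup>2/2)\<^sup>2"
proof -
  define A1 where "A1 = Eset - Ej j"
  define A2 where "A2 = {\<omega>\<in>space M. inE j \<omega> \<and> \<epsilon>\<^sup>2/2 \<le> V j t \<omega>}"
  define A3 where "A3 = {\<omega>\<in>space M. s n0 \<omega> < t}"
  define d2 where "d2 = (\<epsilon>\<^sup>2/2)\<^sup>2"
  have d2: "0 < d2" unfolding d2_def using e by simp
  have [measurable]: "A1 \<in> sets M" "A2 \<in> sets M" "A3 \<in> sets M"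
    unfolding A1_def A2_def A3_def inE_def by measurable
  have ii: "integrable M (\<lambda>\<omega>. indicator A \<omega> :: real)" if "A \<in> sets M" for A
    using that by (intro integrable_real_indicator) (auto simp: less_top[symmetric])
  have iz: "integrable M (\<lambda>\<omega>. (Z j t n0 \<omega>)\<^sup>2 / d2)" using Zsq(1)[OF t] by simp
  have iR: "integrable M (\<lambda>\<omega>. \<epsilon> + indicator A1 \<omega> + indicator A2 \<omega> + indicator A3 \<omega> + (Z j t n0 \<omega>)\<^sup>2 / d2)"
    using ii[of A1] ii[of A2] ii[of A3] iz by auto
  have "(\<integral>\<omega>. fI t \<omega> \<partial>M) \<le> (\<integral>\<omega>. \<epsilon> + indicator A1 \<omega> + indicator A2 \<omega> + indicator A3 \<omega> + (Z j t n0 \<omega>)\<^sup>2 / d2 \<partial>M)"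
  proof (rule integral_mono_AE'[OF iR])
    show "AE \<omega> in M. fI t \<omega> \<le> \<epsilon> + indicator A1 \<omega> + indicator A2 \<omega> + indicator A3 \<omega> + (Z j t n0 \<omega>)\<^sup>2 / d2"
      using AE_good AE_space
    proof eventually_elim
      case (elim \<omega>)
      show ?case using ptwise[OF e t elim(1) elim(2), of j n0] unfolding A1_def A2_def A3_def d2_def .
    qed
    show "AE \<omega> in M. 0 \<le> \<epsilon> + indicator A1 \<omega> + indicator A2 \<omega> + indicator A3 \<omega> + (Z j t n0 \<omega>)\<^sup>2 / d2"
      using e d2 by (intro AE_I2) (auto intro!: add_nonneg_nonneg)
  qed
  also have "\<dots> = \<epsilon> + (\<integral>\<omega>. indicator A1 \<omega> \<partial>M) + (\<integral>\<omega>. indicator A2 \<omega> \<partial>M) + (\<integral>\<omega>. indicator A3 \<omega> \<partial>M)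
      + (\<integral>\<omega>. (Z j t n0 \<omega>)\<^sup>2 \<partial>M) / d2"
    using ii[of A1] ii[of A2] ii[of A3] iz Zsq(1)[OF t] by (simp add: prob_space)
  also have "(\<integral>\<omega>. (Z j t n0 \<omega>)\<^sup>2 \<partial>M) / d2 \<le> 4 * (\<bar>j\<bar> + norm \<theta>0)\<^sup>2 * (\<integral>\<omega>. S \<omega> * Q j t \<omega> \<partial>M) / d2"
    using Zsq(2)[OF t, of j n0] d2 by (simp add: divide_right_mono)
  finally show ?thesis unfolding A1_def A2_def A3_def d2_def by simp
qed

end

context sa begin

interpretation prob_space M by (rule ps)

lemma key:
  assumes e: "0 < \<epsilon>"
  shows "\<forall>\<^sub>F t in at_top. (\<integral>\<omega>. fI t \<omega> \<partial>M) \<le> 4 * \<epsilon>"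
proof -
  define \<delta> where "\<delta> = \<epsilon>\<^sup>2/2"
  have d0: "0 < \<delta>" unfolding \<delta>_def using e by simp
  have "\<forall>\<^sub>F j in sequentially. (\<integral>\<omega>. (indicator (Eset - Ej (real j)) \<omega> :: real) \<partial>M) < \<epsilon>"
    using lim1 e by (intro order_tendstoD) auto
  then obtain j0 :: nat where j0: "(\<integral>\<omega>. (indicator (Eset - Ej (real j0)) \<omega> :: real) \<partial>M) < \<epsilon>"
    unfolding eventually_sequentially by blast
  define j where "j = real j0"
  define K where "K = 4 * (\<bar>j\<bar> + norm \<theta>0)\<^sup>2 / \<delta>\<^sup>2"
  have ev1: "\<forall>\<^sub>F t in at_top. (\<integral>\<omega>. (indicator {\<omega>\<in>space M. inE j \<omega> \<and> \<delta> \<le> V j t \<omega>} \<omega> :: real) \<partial>M) < \<epsilon>"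
    using lim2[OF d0, of j] e by (intro order_tendstoD) auto
  have "((\<lambda>t. K * (\<integral>\<omega>. S \<omega> * Q j t \<omega> \<partial>M)) \<longlongrightarrow> K * 0) at_top"
    by (intro tendsto_mult tendsto_const lim3)
  then have ev2: "\<forall>\<^sub>F t in at_top. K * (\<integral>\<omega>. S \<omega> * Q j t \<omega> \<partial>M) < \<epsilon>"
    using e by (intro order_tendstoD) auto
  show ?thesis using ev1 ev2 eventually_gt_at_top[of 0]
  proof eventually_elim
    case (elim t)
    define R where "R = \<epsilon> + (\<integral>\<omega>. (indicator (Eset - Ej j) \<omega> :: real) \<partial>M)
     + (\<integral>\<omega>. (indicator {\<omega>\<in>space M. inE j \<omega> \<and> \<delta> \<le> V j t \<omega>} \<omega> :: real) \<partial>M)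
     + K * (\<integral>\<omega>. S \<omega> * Q j t \<omega> \<partial>M)"
    have b: "(\<integral>\<omega>. fI t \<omega> \<partial>M) \<le> R + (\<integral>\<omega>. (indicator {\<omega>\<in>space M. s n0 \<omega> < t} \<omega> :: real) \<partial>M)" for n0
      using bound_t[OF e elim(3), of j n0] unfolding R_def K_def \<delta>_def by (simp add: algebra_simps)
    have "(\<lambda>n0. R + (\<integral>\<omega>. (indicator {\<omega>\<in>space M. s n0 \<omega> < t} \<omega> :: real) \<partial>M)) \<longlonglongrightarrow> R + 0"
      by (intro tendsto_add tendsto_const lim4)
    then have "(\<integral>\<omega>. fI t \<omega> \<partial>M) \<le> R + 0"
      by (rule LIMSEQ_le_const) (use b in blast)
    also have "R < 4 * \<epsilon>" unfolding R_def using j0 elim(1,2) e unfolding j_def by linarith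
    finally show ?case by simp
  qed
qed

lemma fI_tendsto: "((\<lambda>t. \<integral>\<omega>. fI t \<omega> \<partial>M) \<longlongrightarrow> 0) at_top"
proof (rule order_tendstoI)
  fix e :: real assume "e < 0"
  have "0 \<le> (\<integral>\<omega>. fI t \<omega> \<partial>M)" for t
    by (intro integral_nonneg_AE AE_I2) (auto simp: fI_def)
  then show "\<forall>\<^sub>F t in at_top. e < (\<integral>\<omega>. fI t \<omega> \<partial>M)" using \<open>e < 0\<close>
    by (intro always_eventually allI) (rule less_le_trans)
next
  fix e :: real assume e: "0 < e"
  have "\<forall>\<^sub>F t in at_top. (\<integral>\<omega>. fI t \<omega> \<partial>M) \<le> 4 * (e/8)" using e by (intro key) simp
  then show "\<forall>\<^sub>F t in at_top. (\<integral>\<omega>. fI t \<omega> \<partial>M) < e"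
    by (rule eventually_mono) (use e in simp)
qed

theorem main:
  "Limsup at_top (\<lambda>t::real. ereal (\<integral>\<omega>. min 1 (norm (\<Theta> (hit_index \<gamma> t \<omega>) \<omega> - \<theta>0)
            * indicator {\<omega>. bdd_above ((\<lambda>n. norm (\<Theta> n \<omega>)) ` {1..})} \<omega>) \<partial>M)) = 0"
proof -
  have "((\<lambda>t. ereal (\<integral>\<omega>. fI t \<omega> \<partial>M)) \<longlongrightarrow> ereal 0) at_top"
    using fI_tendsto by (rule tendsto_ereal)
  then have "Limsup at_top (\<lambda>t. ereal (\<integral>\<omega>. fI t \<omega> \<partial>M)) = ereal 0"
    by (intro lim_imp_Limsup) simp_all
  then show ?thesis unfolding fI_def E0_def by (simp add: zero_ereal_def)
qed

end

theorem corollary4p11: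
  fixes M :: "'a measure" and F :: "nat \<Rightarrow> 'a measure"
    and \<gamma> :: "nat \<Rightarrow> 'a \<Rightarrow> real"
    and \<theta>0 :: "'d::euclidean_space" and g :: "'d \<Rightarrow> 'd" and c :: real
    and \<Theta> :: "nat \<Rightarrow> 'a \<Rightarrow> 'd" and D :: "nat \<Rightarrow> 'a \<Rightarrow> 'd"
  assumes "prob_space M"
    and "filtration (space M) F"
    and "\<And>n. subalgebra M (F n)"
    and "\<And>n. n \<ge> 1 \<Longrightarrow> \<gamma> n \<in> borel_measurable (F (n - 1))"
    and "AE \<omega> in M. limsup (\<lambda>n. ereal (\<gamma> n \<omega>)) = 0"
    and "AE \<omega> in M. (\<Sum>n. ennreal \<bar>\<gamma> (Suc n) \<omega>\<bar>) = \<infinity>"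
    and "\<And>n. n \<ge> 1 \<Longrightarrow> AE \<omega> in M. \<gamma> (Suc n) \<omega> \<le> \<gamma> n \<omega>"
    and "g \<in> borel_measurable borel"
    and "\<And>x. \<exists>e>0. bounded (g ` ball x e)"
    and "c > 0"
    and "\<And>\<theta>. inner (\<theta> - \<theta>0) (g \<theta>) \<le> - c * (norm (\<theta> - \<theta>0))\<^sup>2"
    and "\<And>n. \<Theta> n \<in> borel_measurable (F n)"
    and "\<And>n. n \<ge> 1 \<Longrightarrow> D n \<in> borel_measurable (F n)"
    and "(\<integral>\<^sup>+ \<omega>. (\<Squnion>n\<in>{1..}. ennreal ((norm (D n \<omega>))\<^sup>2)) \<partial>M) < \<infinity>"
    and "\<And>n. n \<ge> 1 \<Longrightarrow> AE \<omega> in M.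
           \<Theta> n \<omega> = \<Theta> (n - 1) \<omega> + \<gamma> n \<omega> *\<^sub>R g (\<Theta> (n - 1) \<omega>) + \<gamma> n \<omega> *\<^sub>R D n \<omega>"
    and "\<And>n b. n \<ge> 1 \<Longrightarrow> b \<in> Basis \<Longrightarrow>
           AE \<omega> in M. real_cond_exp M (F (n - 1)) (\<lambda>\<omega>. inner (D n \<omega>) b) \<omega> = 0"
  shows "Limsup at_top (\<lambda>t::real. ereal (\<integral>\<omega>. min 1 (norm (\<Theta> (hit_index \<gamma> t \<omega>) \<omega> - \<theta>0)
            * indicator {\<omega>. bdd_above ((\<lambda>n. norm (\<Theta> n \<omega>)) ` {1..})} \<omega>) \<partial>M)) = 0"
proof -
  have "sa M F \<gamma> \<theta>0 g c \<Theta> D"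
    by (rule sa.intro) (fact assms)+
  then show ?thesis by (rule sa.main)
qed

end
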